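(* Consider a multi-agent system of $n$ agents described as rigid bodies with poses given by unit dual quaternions $\underline{\boldsymbol{x}}_i=\boldsymbol{r}_i+\varepsilon\frac{1}{2}\boldsymbol{p}_i\boldsymbol{r}_i$. Let the dynamics of each agent be $\operatorname{vec}_{8}\underline{\boldsymbol{u}}_{x,i}\triangleq\operatorname{vec}_{8}\dot{\underline{\boldsymbol{x}}}_{i}$, $i=1,\ldots,n$, and each agent's output be $\underline{\boldsymbol{y}}_{c,i}\triangleq\log(\underline{\boldsymbol{x}}_{c,i})=\log(\underline{\boldsymbol{x}}_{i}\underline{\boldsymbol{\delta}}_{i}^{*})$, where $\underline{\boldsymbol{\delta}}_{i}$ is the constant, locally known desired pose of agent $i$ relative to the center of formation. With the consensus protocol \[ \operatorname{vec}_{8}\underline{\boldsymbol{u}}_{x,i}=-\overset{-}{\boldsymbol{H}}_{8}(\underline{\boldsymbol{\delta}}_{i})\boldsymbol{Q}_{8}(\underline{\boldsymbol{x}}_{c,i})\sum_{j=1}^{n}a_{ij}\operatorname{vec}_{6}\left(\underline{\boldsymbol{y}}_{c,i}-\underline{\boldsymbol{y}}_{c,j}\right), \] the multi-agent system asymptotically achieves formation (i.e., all $\underline{\boldsymbol{x}}_{c,i}$ converge to a common $\underline{\boldsymbol{x}}_c$, so that $\underline{\boldsymbol{x}}_i\to\underline{\boldsymbol{x}}_c\underline{\boldsymbol{\delta}}_i$) if and only if the directed graph $\mathcal{G}$ has a directed spanning tree.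
   Context: Quaternions $\boldsymbol{h}=h_{1}+\hat{\imath}h_{2}+\hat{\jmath}h_{3}+\hat{k}h_{4}$, dual quaternions $\underline{\boldsymbol{h}}=\boldsymbol{h}+\varepsilon\boldsymbol{h}'$ ($\varepsilon^2=0$), conjugate $\underline{\boldsymbol{h}}^*=\mathrm{Re}(\underline{\boldsymbol{h}})-\mathrm{Im}(\underline{\boldsymbol{h}})$; unit dual quaternions $\underline{\boldsymbol{x}}=\boldsymbol{r}+\varepsilon\frac12\boldsymbol{p}\boldsymbol{r}$ with $\boldsymbol{r}=\cos(\phi/2)+\boldsymbol{n}\sin(\phi/2)$, $\phi\in[0,2\pi)$, have $\log\underline{\boldsymbol{x}}=\frac12(\phi\boldsymbol{n}+\varepsilon\boldsymbol{p})$. $\operatorname{vec}_4,\operatorname{vec}_8$ stack coefficients into $\mathbb{R}^4,\mathbb{R}^8$; $\operatorname{vec}_3,\operatorname{vec}_6$ stack imaginary coefficients of pure quaternions/pure dual quaternions. The Hamilton operators satisfy $\operatorname{vec}_8(\underline{\boldsymbol{h}}_1\underline{\boldsymbol{h}}_2)=\overset{+}{\boldsymbol{H}}_8(\underline{\boldsymbol{h}}_1)\operatorname{vec}_8\underline{\boldsymbol{h}}_2=\overset{-}{\boldsymbol{H}}_8(\underline{\boldsymbol{h}}_2)\operatorname{vec}_8\underline{\boldsymbol{h}}_1$, with $\overset{-}{\boldsymbol{H}}_{8}(\underline{\boldsymbol{h}})=\begin{bmatrix}\overset{-}{\boldsymbol{H}}_{4}(\boldsymbol{h}) & \boldsymbol{0}_{4\times4}\\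 \overset{-}{\boldsymbol{H}}_{4}(\boldsymbol{h}') & \overset{-}{\boldsymbol{H}}_{4}(\boldsymbol{h})\end{bmatrix}$, and analogously for $+$, where $\overset{\pm}{\boldsymbol{H}}_4$ are the $4\times4$ quaternion Hamilton operators with $\operatorname{vec}_4(\boldsymbol{h}_1\boldsymbol{h}_2)=\overset{+}{\boldsymbol{H}}_4(\boldsymbol{h}_1)\operatorname{vec}_4\boldsymbol{h}_2=\overset{-}{\boldsymbol{H}}_4(\boldsymbol{h}_2)\operatorname{vec}_4\boldsymbol{h}_1$. For a unit dual quaternion $\underline{\boldsymbol{x}}=\boldsymbol{r}+\varepsilon\frac12\boldsymbol{p}\boldsymbol{r}$, $\boldsymbol{Q}_{8}(\underline{\boldsymbol{x}})=\begin{bmatrix}\boldsymbol{Q}(\boldsymbol{r}) & \boldsymbol{0}_{4\times3}\\ \frac{1}{2}\overset{+}{\boldsymbol{H}}_{4}(\boldsymbol{p})\boldsymbol{Q}(\boldsymbol{r}) & \overset{-}{\boldsymbol{H}}_{4}(\boldsymbol{r})\begin{bmatrix}\boldsymbol{0}_{1\times3}\\ \boldsymbol{I}_3\end{bmatrix}\end{bmatrix}$, with $\boldsymbol{Q}(\boldsymbol{r})=\partial\operatorname{vec}_4\boldsymbol{r}/\partial\operatorname{vec}_3\log\boldsymbol{r}$; it is full column rank and satisfies $\operatorname{vec}_8\dot{\underline{\boldsymbol{x}}}=\boldsymbol{Q}_8(\underline{\boldsymbol{x}})\operatorname{vec}_6\frac{d}{dt}\log\underline{\boldsymbol{x}}$.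 $a_{ij}$ are the adjacency-matrix entries of the weighted directed graph $\mathcal{G}$ ($a_{ij}>0$ iff agent $i$ receives information from agent $j$, $a_{ii}=0$). *)

theory Defs
  imports "HOL-Analysis.Analysis"
begin

text \<open>h = h1 + i h2 + j h3 + k h4 is represented by (vector [h1,h2,h3,h4] :: real^4),
  i.e. we identify a quaternion with vec_4 of it.  Pure quaternions are identified with
  vec_3 of them (real^3).\<close>

definition qmult :: "real^4 \<Rightarrow> real^4 \<Rightarrow> real^4" where
  "qmult a b = vector
     [a$1*b$1 - a$2*b$2 - a$3*b$3 - a$4*b$4,
      a$1*b$2 + a$2*b$1 + a$3*b$4 - a$4*b$3,
      a$1*b$3 - a$2*b$4 + a$3*b$1 + a$4*b$2,
      a$1*b$4 + a$2*b$3 - a$3*b$2 + a$4*b$1]"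

definition qconj :: "real^4 \<Rightarrow> real^4" where
  "qconj h = vector [h$1, - h$2, - h$3, - h$4]"

definition qone :: "real^4" where
  "qone = vector [1, 0, 0, 0]"

text \<open>vec_3 of the imaginary part, and the embedding [0_{1x3}; I_3] of real^3 into real^4\<close>
definition qim3 :: "real^4 \<Rightarrow> real^3" where
  "qim3 h = vector [h$2, h$3, h$4]"

definition pure4 :: "real^3 \<Rightarrow> real^4" where
  "pure4 v = vector [0, v$1, v$2, v$3]"

text \<open>Hamilton operators, as the linear maps given by the 4x4 matrices:
  H4plus h applied to vec_4 g is vec_4 (h g); H4minus h applied to vec_4 g is vec_4 (g h).\<close>
definition H4plus :: "real^4 \<Rightarrow> real^4 \<Rightarrow> real^4" where
  "H4plus h g = qmult h g"

definition H4minus :: "real^4 \<Rightarrow> real^4 \<Rightarrow> real^4" where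
  "H4minus h g = qmult g h"

definition qexp3 :: "real^3 \<Rightarrow> real^4" where
  "qexp3 w = (let s = (if w = 0 then 1 else sin (norm w) / norm w)
              in vector [cos (norm w), s * w$1, s * w$2, s * w$3])"

text \<open>vec_3 log r for a unit quaternion r = cos(phi/2) + n sin(phi/2), phi in [0,2pi):
  log r = phi n / 2.  (phi/2 = arccos r1; n = Im r / |Im r|; log 1 = 0.)\<close>
definition qlog3 :: "real^4 \<Rightarrow> real^3" where
  "qlog3 r = (if qim3 r = 0 then 0 else (arccos (r$1) / norm (qim3 r)) *\<^sub>R qim3 r)"

text \<open>Q(r) = d vec_4 r / d vec_3 log r, as a linear map real^3 to real^4
  (the Jacobian of r = exp(log r) with respect to vec_3 log r).\<close>
definition Qmat :: "real^4 \<Rightarrow> real^3 \<Rightarrow> real^4" where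
  "Qmat r = frechet_derivative qexp3 (at (qlog3 r))"

section \<open>Dual quaternions h + eps h', represented by (vec_4 h, vec_4 h') = vec_8\<close>

type_synonym dq = "(real^4) \<times> (real^4)"

definition dq_mult :: "dq \<Rightarrow> dq \<Rightarrow> dq" where
  "dq_mult x y = (qmult (fst x) (fst y), qmult (fst x) (snd y) + qmult (snd x) (fst y))"

definition dq_conj :: "dq \<Rightarrow> dq" where
  "dq_conj x = (qconj (fst x), qconj (snd x))"

definition unit_dq :: "dq \<Rightarrow> bool" where
  "unit_dq x \<longleftrightarrow> dq_mult x (dq_conj x) = (qone, 0)"

text \<open>vec_6 log x for x = r + eps (1/2) p r: log x = (1/2)(phi n + eps p), where
  (1/2) p = x' r^*.\<close>
definition dq_log6 :: "dq \<Rightarrow> (real^3) \<times> (real^3)" where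
  "dq_log6 x = (qlog3 (fst x), qim3 (qmult (snd x) (qconj (fst x))))"

text \<open>H8minus as the linear map given by the block matrix [H4-(h), 0; H4-(h'), H4-(h)].\<close>
definition H8minus :: "dq \<Rightarrow> dq \<Rightarrow> dq" where
  "H8minus h v = (H4minus (fst h) (fst v),
                  H4minus (snd h) (fst v) + H4minus (fst h) (snd v))"

text \<open>Q_8(x) for x = r + eps (1/2) p r, as the linear map of the block matrix
  [Q(r), 0; (1/2) H4+(p) Q(r), H4-(r) [0;I_3]].\<close>
definition Q8 :: "dq \<Rightarrow> (real^3) \<times> (real^3) \<Rightarrow> dq" where
  "Q8 x v = (let r = fst x; p = 2 *\<^sub>R qmult (snd x) (qconj r)
             in (Qmat r (fst v),
                 (1/2) *\<^sub>R H4plus p (Qmat r (fst v)) + H4minus r (pure4 (snd v))))"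

definition xc :: "('n \<Rightarrow> dq) \<Rightarrow> ('n \<Rightarrow> real \<Rightarrow> dq) \<Rightarrow> 'n \<Rightarrow> real \<Rightarrow> dq" where
  "xc \<delta> x i t = dq_mult (x i t) (dq_conj (\<delta> i))"

definition yc :: "('n \<Rightarrow> dq) \<Rightarrow> ('n \<Rightarrow> real \<Rightarrow> dq) \<Rightarrow> 'n \<Rightarrow> real \<Rightarrow> (real^3) \<times> (real^3)" where
  "yc \<delta> x i t = dq_log6 (xc \<delta> x i t)"

definition protocol ::
  "('n::finite \<Rightarrow> 'n \<Rightarrow> real) \<Rightarrow> ('n \<Rightarrow> dq) \<Rightarrow> ('n \<Rightarrow> real \<Rightarrow> dq) \<Rightarrow> 'n \<Rightarrow> real \<Rightarrow> dq" where
  "protocol a \<delta> x i t =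
     - H8minus (\<delta> i) (Q8 (xc \<delta> x i t) (\<Sum>j\<in>UNIV. a i j *\<^sub>R (yc \<delta> x i t - yc \<delta> x j t)))"

text \<open>x is a (forward, t \<ge> 0) trajectory of the closed-loop system: the poses are unit
  dual quaternions, the output log (x_i delta_i^* ) is defined (primary part \<noteq> -1,
  since phi ranges over [0,2pi)), and vec_8 dx_i/dt = vec_8 u_{x,i}.\<close>
definition closed_loop_solution ::
  "('n::finite \<Rightarrow> 'n \<Rightarrow> real) \<Rightarrow> ('n \<Rightarrow> dq) \<Rightarrow> ('n \<Rightarrow> real \<Rightarrow> dq) \<Rightarrow> bool" where
  "closed_loop_solution a \<delta> x \<longleftrightarrow>
     (\<forall>i t. 0 \<le> t \<longrightarrow>
        unit_dq (x i t) \<and>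
        fst (xc \<delta> x i t) \<noteq> - qone \<and>
        (x i has_vector_derivative protocol a \<delta> x i t) (at t within {0..}))"

definition achieves_formation ::
  "('n::finite \<Rightarrow> 'n \<Rightarrow> real) \<Rightarrow> ('n \<Rightarrow> dq) \<Rightarrow> bool" where
  "achieves_formation a \<delta> \<longleftrightarrow>
     (\<forall>x. closed_loop_solution a \<delta> x \<longrightarrow>
        (\<exists>L. \<forall>i. ((\<lambda>t. xc \<delta> x i t) \<longlongrightarrow> L) at_top))"

text \<open>Graph G: arc j \<rightarrow> i iff a i j > 0.  A directed spanning tree is a rooted out-tree on
  all vertices using arcs of G: a root k and a parent map par with an arc par i \<rightarrow> i for every
  i \<noteq> k, such that following parents from any vertex reaches the root (no cycles).\<close>
definition has_directed_spanning_tree :: "('n \<Rightarrow> 'n \<Rightarrow> real) \<Rightarrow> bool" where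
  "has_directed_spanning_tree a \<longleftrightarrow>
     (\<exists>k par. (\<forall>i. i \<noteq> k \<longrightarrow> a i (par i) > 0) \<and> (\<forall>i. \<exists>m. (par ^^ m) i = k))"

end

theory Submission
  imports Defs
begin


lemma vector_4 [simp]:
 "(vector [x,y,z,w] ::('a::zero)^4)$1 = x"
 "(vector [x,y,z,w] ::('a::zero)^4)$2 = y"
 "(vector [x,y,z,w] ::('a::zero)^4)$3 = z"
 "(vector [x,y,z,w] ::('a::zero)^4)$4 = w"
  unfolding vector_def by simp_all

lemma vec4_eq_iff: "(x::real^4) = y \<longleftrightarrow> x$1 = y$1 \<and> x$2 = y$2 \<and> x$3 = y$3 \<and> x$4 = y$4"
  by (auto simp: vec_eq_iff forall_4)

lemma vec3_eq_iff: "(x::real^3) = y \<longleftrightarrow> x$1 = y$1 \<and> x$2 = y$2 \<and> x$3 = y$3"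
  by (auto simp: vec_eq_iff forall_3)

lemma qmult_comp [simp]:
  "qmult a b $1 = a$1*b$1 - a$2*b$2 - a$3*b$3 - a$4*b$4"
  "qmult a b $2 = a$1*b$2 + a$2*b$1 + a$3*b$4 - a$4*b$3"
  "qmult a b $3 = a$1*b$3 - a$2*b$4 + a$3*b$1 + a$4*b$2"
  "qmult a b $4 = a$1*b$4 + a$2*b$3 - a$3*b$2 + a$4*b$1"
  by (simp_all add: qmult_def)

lemma qconj_comp [simp]:
  "qconj h $1 = h$1" "qconj h $2 = - h$2" "qconj h $3 = - h$3" "qconj h $4 = - h$4"
  by (simp_all add: qconj_def)

lemma qone_comp [simp]: "qone $1 = 1" "qone $2 = 0" "qone $3 = 0" "qone $4 = 0"
  by (simp_all add: qone_def)

lemma pure4_comp [simp]: "pure4 v $1 = 0" "pure4 v $2 = v$1" "pure4 v $3 = v$2" "pure4 v $4 = v$3"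
  by (simp_all add: pure4_def)

lemma qim3_comp [simp]: "qim3 h $1 = h$2" "qim3 h $2 = h$3" "qim3 h $3 = h$4"
  by (simp_all add: qim3_def)

lemma norm4_sq: "(norm (x::real^4))^2 = x$1^2 + x$2^2 + x$3^2 + x$4^2"
  unfolding power2_norm_eq_inner inner_vec_def sum_4 by (simp add: power2_eq_square)

lemma norm3_sq: "(norm (x::real^3))^2 = x$1^2 + x$2^2 + x$3^2"
  unfolding power2_norm_eq_inner inner_vec_def sum_3 by (simp add: power2_eq_square)

lemma qmult_assoc: "qmult (qmult a b) c = qmult a (qmult b c)"
  by (simp add: vec4_eq_iff algebra_simps)

lemma qmult_add_left: "qmult (a + b) c = qmult a c + qmult b c"
  by (simp add: vec4_eq_iff algebra_simps)
lemma qmult_add_right: "qmult a (b + c) = qmult a b + qmult a c"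
  by (simp add: vec4_eq_iff algebra_simps)
lemma qmult_scaleR_left: "qmult (r *\<^sub>R a) c = r *\<^sub>R qmult a c"
  by (simp add: vec4_eq_iff algebra_simps)
lemma qmult_scaleR_right: "qmult a (r *\<^sub>R c) = r *\<^sub>R qmult a c"
  by (simp add: vec4_eq_iff algebra_simps)
lemma qmult_zero [simp]: "qmult 0 a = 0" "qmult a 0 = 0"
  by (simp_all add: vec4_eq_iff)
lemma qmult_one [simp]: "qmult qone a = a" "qmult a qone = a"
  by (simp_all add: vec4_eq_iff)
lemma qconj_mult: "qconj (qmult a b) = qmult (qconj b) (qconj a)"
  by (simp add: vec4_eq_iff algebra_simps)
lemma qconj_conj [simp]: "qconj (qconj a) = a"
  by (simp add: vec4_eq_iff)
lemma norm_qmult: "norm (qmult a b) = norm a * norm b"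
proof -
  have "(norm (qmult a b))^2 = (norm a * norm b)^2"
    unfolding power_mult_distrib norm4_sq by (simp add: algebra_simps power2_eq_square)
  then show ?thesis by (simp add: power2_eq_iff_nonneg)
qed
lemma norm_qconj: "norm (qconj a) = norm a"
proof -
  have "(norm (qconj a))^2 = (norm a)^2" unfolding norm4_sq by simp
  then show ?thesis by (simp add: power2_eq_iff_nonneg)
qed
lemma qmult_qconj_self: "qmult a (qconj a) = (norm a)^2 *\<^sub>R qone"
  unfolding vec4_eq_iff norm4_sq by (simp add: power2_eq_square)
lemma qconj_self_qmult: "qmult (qconj a) a = (norm a)^2 *\<^sub>R qone"
  unfolding vec4_eq_iff norm4_sq by (simp add: power2_eq_square)


definition dqone :: dq where "dqone = (qone, 0)"

lemma dq_mult_assoc: "dq_mult (dq_mult x y) z = dq_mult x (dq_mult y z)"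
  by (simp add: dq_mult_def qmult_assoc qmult_add_left qmult_add_right)

lemma dq_conj_mult: "dq_conj (dq_mult x y) = dq_mult (dq_conj y) (dq_conj x)"
  by (simp add: dq_mult_def dq_conj_def qconj_mult vec4_eq_iff)

lemma dq_mult_one [simp]: "dq_mult x dqone = x" "dq_mult dqone x = x"
  by (simp_all add: dq_mult_def dqone_def)

lemma H8minus_eq: "H8minus h v = dq_mult v h"
  by (simp add: H8minus_def dq_mult_def H4minus_def add.commute)

lemma unit_dq_iff: "unit_dq x \<longleftrightarrow> dq_mult x (dq_conj x) = dqone"
  by (simp add: unit_dq_def dqone_def)

lemma unit_norm: assumes "unit_dq x" shows "norm (fst x) = 1"
proof -
  have "qmult (fst x) (qconj (fst x)) = qone" using assms by (simp add: unit_dq_def dq_mult_def dq_conj_def)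
  then have "(norm (fst x))^2 = 1" unfolding qmult_qconj_self by (simp add: vec4_eq_iff)
  then show ?thesis by (simp add: power2_eq_1_iff) (smt (verit) norm_ge_zero)
qed

lemma unit_snd: assumes "unit_dq x"
  shows "qmult (fst x) (qconj (snd x)) + qmult (snd x) (qconj (fst x)) = 0"
  using assms by (simp add: unit_dq_def dq_mult_def dq_conj_def)

lemma unit_conj_left: assumes "unit_dq x" shows "dq_mult (dq_conj x) x = dqone"
proof -
  obtain r d where x: "x = (r, d)" by force
  have n: "norm r = 1" using unit_norm[OF assms] x by simp
  have rr: "qmult (qconj r) r = qone" using qconj_self_qmult[of r] n by simp
  have s: "qmult r (qconj d) + qmult d (qconj r) = 0" using unit_snd[OF assms] x by simp
  have "qmult (qconj r) (qmult (qmult r (qconj d) + qmult d (qconj r)) r) = 0" using s by simp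
  then have "qmult (qconj d) r + qmult (qconj r) d = 0"
    by (simp add: qmult_add_left qmult_add_right qmult_assoc[symmetric] rr) (simp add: qmult_assoc rr)
  then show ?thesis using rr x by (simp add: dq_mult_def dq_conj_def dqone_def add.commute)
qed

lemma unit_dq_mult: assumes "unit_dq x" "unit_dq y" shows "unit_dq (dq_mult x y)"
proof -
  have "dq_mult (dq_mult x y) (dq_conj (dq_mult x y)) = dq_mult x (dq_mult (dq_mult y (dq_conj y)) (dq_conj x))"
    by (simp add: dq_conj_mult dq_mult_assoc)
  also have "\<dots> = dqone" using assms by (simp add: unit_dq_iff)
  finally show ?thesis by (simp add: unit_dq_iff)
qed

lemma unit_dq_conj: assumes "unit_dq x" shows "unit_dq (dq_conj x)"
  using unit_conj_left[OF assms] by (simp add: unit_dq_iff dq_conj_def)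

lemma unit_re_zero: assumes "unit_dq x" shows "(qmult (snd x) (qconj (fst x)))$1 = 0"
proof -
  have "(qmult (fst x) (qconj (snd x)) + qmult (snd x) (qconj (fst x)))$1 = 0"
    using unit_snd[OF assms] by simp
  then show ?thesis by (simp add: algebra_simps)
qed

lemma pure4_qim3: "h$1 = 0 \<Longrightarrow> pure4 (qim3 h) = h"
  by (simp add: vec4_eq_iff)

lemma qim3_pure4 [simp]: "qim3 (pure4 v) = v"
  by (simp add: vec3_eq_iff)

lemma unit_snd_repr: assumes "unit_dq x"
  shows "snd x = qmult (pure4 (qim3 (qmult (snd x) (qconj (fst x))))) (fst x)"
proof -
  have n: "norm (fst x) = 1" using unit_norm[OF assms] .
  have rr: "qmult (qconj (fst x)) (fst x) = qone" using qconj_self_qmult[of "fst x"] n by simp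
  show ?thesis unfolding pure4_qim3[OF unit_re_zero[OF assms]] qmult_assoc rr by simp
qed

lemma unit_q_comp: "norm (r::real^4) = 1 \<Longrightarrow> r$1^2 + r$2^2 + r$3^2 + r$4^2 = 1"
  using norm4_sq[of r] by simp

lemma unit_r1_bounds: assumes "norm (r::real^4) = 1" shows "-1 \<le> r$1" "r$1 \<le> 1"
proof -
  have "r$1^2 \<le> 1" using unit_q_comp[OF assms] by (smt (verit) zero_le_power2)
  then show "-1 \<le> r$1" "r$1 \<le> 1" by (simp_all add: abs_square_le_1)
qed

lemma unit_r1_neq: assumes "norm (r::real^4) = 1" "r \<noteq> - qone" shows "r$1 \<noteq> -1"
proof
  assume h: "r$1 = -1"
  have "r$2^2 + r$3^2 + r$4^2 = 0" using unit_q_comp[OF assms(1)] h by simp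
  then have "r$2^2 = 0 \<and> r$3^2 = 0 \<and> r$4^2 = 0" by (smt (verit) zero_le_power2)
  then have "r$2 = 0" "r$3 = 0" "r$4 = 0" by simp_all
  then have "r = - qone" using h by (simp add: vec4_eq_iff)
  with assms(2) show False by simp
qed

lemma norm_qim3: assumes "norm (r::real^4) = 1" shows "norm (qim3 r) = sqrt (1 - r$1^2)"
proof -
  have "(norm (qim3 r))^2 = 1 - r$1^2" using unit_q_comp[OF assms] norm3_sq[of "qim3 r"] by simp
  then show ?thesis by (metis norm_ge_zero real_sqrt_abs abs_of_nonneg real_sqrt_unique)
qed

definition phi :: "real \<Rightarrow> real" where
  "phi u = (if u = 1 then 1 else arccos u / sqrt (1 - u^2))"

lemma qlog3_phi: assumes "norm (r::real^4) = 1" "r$1 \<noteq> -1"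
  shows "qlog3 r = phi (r$1) *\<^sub>R qim3 r"
proof (cases "qim3 r = 0")
  case True then show ?thesis by (simp add: qlog3_def)
next
  case False
  have "r$1 \<noteq> 1"
  proof
    assume "r$1 = 1"
    then have "norm (qim3 r) = 0" using norm_qim3[OF assms(1)] by simp
    with False show False by simp
  qed
  then show ?thesis using False norm_qim3[OF assms(1)] by (simp add: qlog3_def phi_def)
qed

lemma qexp3_comp:
  "qexp3 w $1 = cos (norm w)"
  "qexp3 w $2 = (if w = 0 then 1 else sin (norm w) / norm w) * w$1"
  "qexp3 w $3 = (if w = 0 then 1 else sin (norm w) / norm w) * w$2"
  "qexp3 w $4 = (if w = 0 then 1 else sin (norm w) / norm w) * w$3"
  by (simp_all add: qexp3_def Let_def)

lemma qexp3_qlog3: assumes "norm (r::real^4) = 1" "r$1 \<noteq> -1"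
  shows "qexp3 (qlog3 r) = r"
proof (cases "qim3 r = 0")
  case True
  then have "r$2 = 0" "r$3 = 0" "r$4 = 0" by (auto simp: vec3_eq_iff)
  then have "r$1^2 = 1" using unit_q_comp[OF assms(1)] by simp
  then have "r$1 = 1" using assms(2) by (simp add: power2_eq_1_iff)
  then show ?thesis using True \<open>r$2 = 0\<close> \<open>r$3 = 0\<close> \<open>r$4 = 0\<close>
    by (simp add: qlog3_def vec4_eq_iff qexp3_comp)
next
  case False
  have b: "-1 \<le> r$1" "r$1 \<le> 1" using unit_r1_bounds[OF assms(1)] by auto
  have "r$1 \<noteq> 1"
  proof
    assume "r$1 = 1"
    then have "norm (qim3 r) = 0" using norm_qim3[OF assms(1)] by simp
    with False show False by simp
  qed
  then have lt: "-1 < r$1" "r$1 < 1" using b assms(2) by auto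
  have ac: "0 < arccos (r$1)" "arccos (r$1) < pi" using arccos_lt_bounded[OF lt] by auto
  have ni: "norm (qim3 r) > 0" using False by simp
  define c where "c = arccos (r$1) / norm (qim3 r)"
  have c: "c > 0" using ac ni by (simp add: c_def)
  have ql: "qlog3 r = c *\<^sub>R qim3 r" using False by (simp add: qlog3_def c_def)
  have nl: "norm (qlog3 r) = arccos (r$1)" using ql c ni ac by (simp add: c_def)
  have nz: "qlog3 r \<noteq> 0" using nl ac by auto
  have sa: "sin (arccos (r$1)) = norm (qim3 r)"
    using sin_arccos_abs[of "r$1"] b norm_qim3[OF assms(1)] by simp
  have k: "sin (norm (qlog3 r)) / norm (qlog3 r) * c = 1"
    unfolding nl sa c_def using ac ni by simp
  have e1: "(sin (norm (qlog3 r)) / norm (qlog3 r) * c) * r$2 = r$2"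
       "(sin (norm (qlog3 r)) / norm (qlog3 r) * c) * r$3 = r$3"
       "(sin (norm (qlog3 r)) / norm (qlog3 r) * c) * r$4 = r$4" unfolding k by simp_all
  have q2: "qlog3 r $1 = c * r$2" "qlog3 r $2 = c * r$3" "qlog3 r $3 = c * r$4"
    unfolding ql by simp_all
  show ?thesis unfolding vec4_eq_iff qexp3_comp if_not_P[OF nz] q2
    using b e1 by (simp only: nl cos_arccos mult.assoc[symmetric])
qed

lemma norm_qlog3_lt: assumes "norm (r::real^4) = 1" "r$1 \<noteq> -1"
  shows "norm (qlog3 r) < pi"
proof (cases "qim3 r = 0")
  case True then show ?thesis by (simp add: qlog3_def pi_gt_zero)
next
  case False
  have b: "-1 < r$1" "r$1 \<le> 1" using unit_r1_bounds[OF assms(1)] assms(2) by auto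
  have ni: "norm (qim3 r) > 0" using False by simp
  have "norm (qlog3 r) = arccos (r$1)" using False ni b by (simp add: qlog3_def arccos_lbound)
  also have "\<dots> < pi" using b arccos_lt_bounded[of "r$1"] 
    by (cases "r$1 = 1") (auto simp: pi_gt_zero)
  finally show ?thesis .
qed


lemma linear_pure4: "linear pure4"
  by (simp add: linear_iff vec4_eq_iff)
lemma bl_pure4: "bounded_linear pure4"
  using linear_pure4 linear_conv_bounded_linear by blast
lemma linear_qim3: "linear qim3"
  by (simp add: linear_iff vec3_eq_iff)
lemma bl_qim3: "bounded_linear qim3"
  using linear_qim3 linear_conv_bounded_linear by blast

lemma norm_pure4: "norm (pure4 v) = norm v"
proof -
  have "(norm (pure4 v))^2 = (norm v)^2" unfolding norm4_sq norm3_sq by simp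
  then show ?thesis by (simp add: power2_eq_iff_nonneg)
qed

lemma norm_qone [simp]: "norm qone = 1"
proof -
  have "(norm qone)^2 = 1" unfolding norm4_sq by simp
  then show ?thesis by (simp add: power2_eq_1_iff) (smt (verit) norm_ge_zero)
qed

lemma qexp3_zero [simp]: "qexp3 0 = qone"
  by (simp add: vec4_eq_iff qexp3_comp)

definition E3 :: "real^3 \<Rightarrow> real^4" where
  "E3 w = cos (norm w) *\<^sub>R qone + (sin (norm w) / norm w) *\<^sub>R pure4 w"

lemma qexp3_E3: "w \<noteq> 0 \<Longrightarrow> qexp3 w = E3 w"
  by (simp add: vec4_eq_iff qexp3_comp E3_def)

definition DE3 :: "real^3 \<Rightarrow> real^3 \<Rightarrow> real^4" where
  "DE3 w h = (- sin (norm w) * (sgn w \<bullet> h)) *\<^sub>R qone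
     + ((cos (norm w) * norm w - sin (norm w)) / (norm w)^2 * (sgn w \<bullet> h)) *\<^sub>R pure4 w
     + (sin (norm w) / norm w) *\<^sub>R pure4 h"

lemma E3_deriv: assumes "w \<noteq> 0" shows "(E3 has_derivative DE3 w) (at w)"
proof -
  have n: "norm w \<noteq> 0" using assms by simp
  have dn: "(norm has_derivative (\<lambda>h. h \<bullet> sgn w)) (at w)"
    using has_derivative_norm[OF assms] by simp
  have dc: "((\<lambda>x. cos (norm x)) has_derivative (\<lambda>h. (h \<bullet> sgn w) * (- sin (norm w)))) (at w)"
    by (rule DERIV_compose_FDERIV[OF DERIV_cos dn])
  have ds0: "DERIV (\<lambda>x. sin x / x) (norm w) :> (cos (norm w) * norm w - sin (norm w)) / (norm w)^2"
  proof -
    have "DERIV (\<lambda>x. sin x / x) (norm w) :> (cos (norm w) * norm w - sin (norm w) * 1) / (norm w * norm w)"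
      by (rule DERIV_divide[OF DERIV_sin DERIV_ident n])
    then show ?thesis by (simp add: power2_eq_square)
  qed
  have ds: "((\<lambda>x. sin (norm x) / norm x) has_derivative (\<lambda>h. (h \<bullet> sgn w) * ((cos (norm w) * norm w - sin (norm w)) / (norm w)^2))) (at w)"
    by (rule DERIV_compose_FDERIV[OF ds0 dn])
  have dp: "(pure4 has_derivative pure4) (at w)"
    by (rule bounded_linear.has_derivative[OF bl_pure4 has_derivative_ident])
  have dq: "((\<lambda>x. qone) has_derivative (\<lambda>h. 0)) (at w)" by (rule has_derivative_const)
  have "(E3 has_derivative (\<lambda>h. (cos (norm w) *\<^sub>R 0 + ((h \<bullet> sgn w) * (- sin (norm w))) *\<^sub>R qone)
      + ((sin (norm w) / norm w) *\<^sub>R pure4 h + ((h \<bullet> sgn w) * ((cos (norm w) * norm w - sin (norm w)) / (norm w)^2)) *\<^sub>R pure4 w))) (at w)"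
    unfolding E3_def
    by (rule has_derivative_add[OF has_derivative_scaleR[OF dc dq] has_derivative_scaleR[OF ds dp]])
  moreover have "(\<lambda>h. (cos (norm w) *\<^sub>R 0 + ((h \<bullet> sgn w) * (- sin (norm w))) *\<^sub>R qone)
      + ((sin (norm w) / norm w) *\<^sub>R pure4 h + ((h \<bullet> sgn w) * ((cos (norm w) * norm w - sin (norm w)) / (norm w)^2)) *\<^sub>R pure4 w)) = DE3 w"
    by (rule ext) (simp add: DE3_def algebra_simps inner_commute)
  ultimately show ?thesis by simp
qed

lemma qexp3_deriv_nz: assumes "w \<noteq> 0" shows "(qexp3 has_derivative DE3 w) (at w)"
  by (rule has_derivative_transform_within_open[OF E3_deriv[OF assms], of "-{0}"])
     (auto simp: assms qexp3_E3)

lemma lim_cos_quot: "(\<lambda>x::real. (cos x - 1) / x) \<midarrow>0\<rightarrow> 0"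
  using DERIV_cos[of 0] unfolding DERIV_def by simp

lemma lim_sin_quot: "(\<lambda>x::real. sin x / x) \<midarrow>0\<rightarrow> 1"
  using DERIV_sin[of 0] unfolding DERIV_def by simp

lemma qexp3_deriv_0: "(qexp3 has_derivative pure4) (at 0)"
  unfolding has_derivative_at
proof (intro conjI bl_pure4)
  define G where "G x = \<bar>(cos x - 1) / x\<bar> + \<bar>sin x / x - 1\<bar>" for x :: real
  have G: "G \<midarrow>0\<rightarrow> 0"
  proof -
    have "(\<lambda>x::real. \<bar>(cos x - 1) / x\<bar> + \<bar>sin x / x - 1\<bar>) \<midarrow>0\<rightarrow> \<bar>0\<bar> + \<bar>1 - 1\<bar>"
      by (intro tendsto_intros lim_cos_quot lim_sin_quot)
    then show ?thesis unfolding G_def by (simp only: abs_zero diff_self add_0)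
  qed
  have GN: "(\<lambda>h::real^3. G (norm h)) \<midarrow>0\<rightarrow> 0"
    by (rule LIM_compose2[OF _ G]) (auto intro!: tendsto_eq_intros exI[of _ 1])
  show "(\<lambda>h. norm (qexp3 (0 + h) - qexp3 0 - pure4 h) / norm h) \<midarrow>0\<rightarrow> 0"
  proof (rule Lim_null_comparison[OF _ GN])
    show "\<forall>\<^sub>F h in at 0. norm (norm (qexp3 (0 + h) - qexp3 0 - pure4 h) / norm h) \<le> G (norm h)"
    proof (rule eventually_at_filter[THEN iffD2], rule always_eventually, intro allI impI)
      fix h :: "real^3" assume "h \<noteq> 0"
      then have n: "norm h > 0" by simp
      have eq: "qexp3 (0 + h) - qexp3 0 - pure4 h = (cos (norm h) - 1) *\<^sub>R qone + (sin (norm h) / norm h - 1) *\<^sub>R pure4 h"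
        using \<open>h \<noteq> 0\<close> by (simp add: qexp3_E3 E3_def algebra_simps)
      have "norm (qexp3 (0 + h) - qexp3 0 - pure4 h) \<le> \<bar>cos (norm h) - 1\<bar> + \<bar>sin (norm h) / norm h - 1\<bar> * norm h"
        unfolding eq by (rule order_trans[OF norm_triangle_ineq]) (simp add: norm_pure4)
      then have "norm (qexp3 (0 + h) - qexp3 0 - pure4 h) / norm h \<le> (\<bar>cos (norm h) - 1\<bar> + \<bar>sin (norm h) / norm h - 1\<bar> * norm h) / norm h"
        using n by (simp add: divide_right_mono)
      also have "\<dots> = G (norm h)" using n by (simp add: G_def add_divide_distrib abs_divide)
      finally show "norm (norm (qexp3 (0 + h) - qexp3 0 - pure4 h) / norm h) \<le> G (norm h)" by simp
    qed
  qed
qed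

definition Dexp :: "real^3 \<Rightarrow> real^3 \<Rightarrow> real^4" where
  "Dexp w = (if w = 0 then pure4 else DE3 w)"

lemma qexp3_deriv: "(qexp3 has_derivative Dexp w) (at w)"
  by (cases "w = 0") (simp_all add: Dexp_def qexp3_deriv_0 qexp3_deriv_nz)

lemma qexp3_cont: "continuous (at w) qexp3"
  by (rule has_derivative_continuous[OF qexp3_deriv])

lemma Dexp_inj: assumes "norm w < pi" "Dexp w h = 0" shows "h = 0"
proof (cases "w = 0")
  case True
  then have "pure4 h = 0" using assms by (simp add: Dexp_def)
  then show ?thesis by (metis norm_pure4 norm_eq_zero)
next
  case False
  have n: "0 < norm w" using False by simp
  have s: "sin (norm w) > 0" using sin_gt_zero[OF n assms(1)] .
  have D: "DE3 w h = 0" using assms False by (simp add: Dexp_def)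
  then have "(DE3 w h) $ 1 = 0" by simp
  then have "sin (norm w) * (sgn w \<bullet> h) = 0" by (simp add: DE3_def)
  then have i: "sgn w \<bullet> h = 0" using s by simp
  then have "(sin (norm w) / norm w) *\<^sub>R pure4 h = 0" using D by (simp add: DE3_def)
  then have "pure4 h = 0" using s n by simp
  then show ?thesis by (metis norm_pure4 norm_eq_zero)
qed

lemma Qmat_eq: "Qmat r = Dexp (qlog3 r)"
  unfolding Qmat_def by (rule frechet_derivative_at[OF qexp3_deriv, symmetric])

lemma bl_Dexp: "bounded_linear (Dexp w)"
  by (rule has_derivative_bounded_linear[OF qexp3_deriv])


lemma at_Ici_nonbot: assumes "0 \<le> (t::real)" shows "at t within {0..} \<noteq> bot"
proof (cases "t = 0")
  case True
  have "at t within {t..} = at_right t" by (rule at_within_Ici_at_right)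
  moreover have "at_right t \<noteq> bot" using trivial_limit_at_right_real[of t] by (simp add: trivial_limit_def)
  ultimately show ?thesis using True by simp
next
  case False
  then have "t \<in> interior {0..}" using assms by simp
  then have "at t within {0..} = at t" by (rule at_within_interior)
  moreover have "at t \<noteq> (bot :: real filter)" by (rule at_neq_bot)
  ultimately show ?thesis by simp
qed

lemma lim_x_sin: "((\<lambda>x::real. x / sin x) \<longlongrightarrow> 1) (at 0)"
proof -
  have "((\<lambda>x::real. inverse (sin x / x)) \<longlongrightarrow> inverse 1) (at 0)"
    by (rule tendsto_inverse[OF lim_sin_quot]) simp
  then show ?thesis by simp
qed

lemma phi_cont: "continuous (at 1 within {-1..1}) phi"
proof -
  have ac: "(arccos \<longlongrightarrow> arccos 1) (at 1 within {-1..1})"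
    using continuous_on_arccos'[unfolded continuous_on_def, rule_format, of 1] by simp
  have "filterlim arccos (at 0) (at 1 within {-1..1})"
    unfolding filterlim_at
  proof
    show "\<forall>\<^sub>F x in at 1 within {- 1..1}. arccos x \<in> UNIV \<and> arccos x \<noteq> 0"
      unfolding eventually_at_filter
      by (rule always_eventually) (auto simp: arccos_eq_0_iff)
    show "(arccos \<longlongrightarrow> 0) (at 1 within {- 1..1})" using ac by simp
  qed
  then have "((\<lambda>u. arccos u / sin (arccos u)) \<longlongrightarrow> 1) (at 1 within {-1..1})"
    by (rule filterlim_compose[OF lim_x_sin])
  moreover have "\<forall>\<^sub>F u in at 1 within {-1..1}. arccos u / sin (arccos u) = phi u"
    unfolding eventually_at_filter
    by (rule always_eventually) (auto simp: phi_def sin_arccos_abs abs_le_iff)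
  ultimately have "(phi \<longlongrightarrow> 1) (at 1 within {-1..1})" by (rule Lim_transform_eventually)
  then show ?thesis unfolding continuous_within by (simp add: phi_def)
qed

lemma deriv_scaleR_zero:
  fixes h :: "real \<Rightarrow> 'a::real_normed_vector"
  assumes h: "(h has_vector_derivative h') (at t within S)" and h0: "h t = 0"
    and g: "continuous (at t within S) g"
  shows "((\<lambda>s. g s *\<^sub>R h s) has_vector_derivative g t *\<^sub>R h') (at t within S)"
proof -
  have Q: "((\<lambda>s. (h s - h t - (s - t) *\<^sub>R h') /\<^sub>R norm (s - t)) \<longlongrightarrow> 0) (at t within S)"
    using h unfolding has_vector_derivative_def has_derivative_at_within by simp
  have gt: "(g \<longlongrightarrow> g t) (at t within S)" using g by (simp add: continuous_within)
  have A: "((\<lambda>s. g s *\<^sub>R ((h s - h t - (s - t) *\<^sub>R h') /\<^sub>R norm (s - t))) \<longlongrightarrow> g t *\<^sub>R 0) (at t within S)"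
    by (rule tendsto_scaleR[OF gt Q])
  have B: "((\<lambda>s. ((g s - g t) * ((s - t) / norm (s - t))) *\<^sub>R h') \<longlongrightarrow> 0) (at t within S)"
  proof (rule Lim_null_comparison)
    show "\<forall>\<^sub>F s in at t within S. norm (((g s - g t) * ((s - t) / norm (s - t))) *\<^sub>R h') \<le> \<bar>g s - g t\<bar> * norm h'"
    proof (rule always_eventually, intro allI)
      fix s
      have "\<bar>(s - t) / norm (s - t)\<bar> \<le> 1" by (cases "s = t") auto
      then have "\<bar>(g s - g t) * ((s - t) / norm (s - t))\<bar> \<le> \<bar>g s - g t\<bar>"
        by (simp add: abs_mult mult_left_le)
      then show "norm (((g s - g t) * ((s - t) / norm (s - t))) *\<^sub>R h') \<le> \<bar>g s - g t\<bar> * norm h'"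
        by (simp only: norm_scaleR) (rule mult_right_mono[OF _ norm_ge_zero])
    qed
    have "((\<lambda>s. \<bar>g s - g t\<bar> * norm h') \<longlongrightarrow> \<bar>g t - g t\<bar> * norm h') (at t within S)"
      by (intro tendsto_intros gt)
    then show "((\<lambda>s. \<bar>g s - g t\<bar> * norm h') \<longlongrightarrow> 0) (at t within S)" by simp
  qed
  have C: "((\<lambda>s. g s *\<^sub>R ((h s - h t - (s - t) *\<^sub>R h') /\<^sub>R norm (s - t)) + ((g s - g t) * ((s - t) / norm (s - t))) *\<^sub>R h') \<longlongrightarrow> 0) (at t within S)"
    using tendsto_add[OF A B] by (simp only: scaleR_zero_right add_0_left)
  have eq: "g s *\<^sub>R ((h s - h t - (s - t) *\<^sub>R h') /\<^sub>R norm (s - t)) + ((g s - g t) * ((s - t) / norm (s - t))) *\<^sub>R h'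
     = (g s *\<^sub>R h s - g t *\<^sub>R h t - (s - t) *\<^sub>R (g t *\<^sub>R h')) /\<^sub>R norm (s - t)" for s
    using h0 by (simp add: algebra_simps scaleR_diff_right divide_inverse)
  have C': "((\<lambda>s. (g s *\<^sub>R h s - g t *\<^sub>R h t - (s - t) *\<^sub>R (g t *\<^sub>R h')) /\<^sub>R norm (s - t)) \<longlongrightarrow> 0) (at t within S)"
    using C unfolding eq .
  show ?thesis
    unfolding has_vector_derivative_def has_derivative_at_within
    by (intro conjI bounded_linear_scaleR_left C')
qed


lemma log_deriv_exists:
  assumes r: "\<And>s. 0 \<le> s \<Longrightarrow> norm (r s) = 1 \<and> r s $ 1 \<noteq> -1"
    and dr: "(r has_vector_derivative r') (at t within {0..})" and t: "0 \<le> t"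
  shows "\<exists>l'. ((\<lambda>s. qlog3 (r s)) has_vector_derivative l') (at t within {0..})"
proof -
  have eq: "\<And>s. s \<in> {0..} \<Longrightarrow> qlog3 (r s) = phi (r s $ 1) *\<^sub>R qim3 (r s)"
    using r qlog3_phi by auto
  have dim: "((\<lambda>s. qim3 (r s)) has_vector_derivative qim3 r') (at t within {0..})"
    by (rule bounded_linear.has_vector_derivative[OF bl_qim3 dr])
  have d1: "((\<lambda>s. r s $ 1) has_vector_derivative r' $ 1) (at t within {0..})"
    by (rule bounded_linear.has_vector_derivative[OF bounded_linear_vec_nth dr])
  have bnds: "-1 \<le> r s $ 1" "r s $ 1 \<le> 1" if "0 \<le> s" for s using unit_r1_bounds r that by auto
  have ex: "\<exists>l'. ((\<lambda>s. phi (r s $ 1) *\<^sub>R qim3 (r s)) has_vector_derivative l') (at t within {0..})"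
  proof (cases "r t $ 1 = 1")
    case True
    have "qim3 (r t) = 0" using norm_qim3[of "r t"] r[OF t] True by simp
    moreover have "continuous (at t within {0..}) (\<lambda>s. phi (r s $ 1))"
    proof -
      have c1: "continuous (at t within {0..}) (\<lambda>s. r s $ 1)"
        using d1 by (rule has_vector_derivative_continuous)
      have "continuous (at ((\<lambda>s. r s $ 1) t) within {-1..1}) phi"
        using phi_cont True by simp
      then have "continuous (at ((\<lambda>s. r s $ 1) t) within (\<lambda>s. r s $ 1) ` {0..}) phi"
        by (rule continuous_within_subset) (use bnds in auto)
      then show ?thesis using continuous_within_compose[OF c1] by (simp add: o_def)
    qed
    ultimately have "((\<lambda>s. phi (r s $ 1) *\<^sub>R qim3 (r s)) has_vector_derivative phi (r t $ 1) *\<^sub>R qim3 r') (at t within {0..})"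
      by (rule deriv_scaleR_zero[OF dim])
    then show ?thesis by (rule exI)
  next
    case False
    have lt: "-1 < r t $ 1" "r t $ 1 < 1" using False r[OF t] bnds[OF t] by auto
    define u0 where "u0 = r t $ 1"
    have pos: "0 < 1 - u0^2" using lt by (simp add: u0_def abs_square_less_1 abs_less_iff)
    have sq: "DERIV (\<lambda>u. sqrt (1 - u^2)) u0 :> inverse (sqrt (1 - u0^2)) / 2 * (0 - real 2 * u0 ^ (2 - Suc 0))"
    proof -
      have d1: "DERIV (\<lambda>u. 1 - u^2) u0 :> 0 - real 2 * u0 ^ (2 - Suc 0)"
        by (rule DERIV_diff[OF DERIV_const DERIV_pow])
      show ?thesis by (rule DERIV_chain2[OF _ d1], rule DERIV_real_sqrt[OF pos])
    qed
    have nz: "sqrt (1 - u0^2) \<noteq> 0" using pos by simp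
    have "\<exists>D. DERIV (\<lambda>u. arccos u / sqrt (1 - u^2)) u0 :> D"
      by (rule exI, rule DERIV_divide[OF DERIV_arccos[OF lt[folded u0_def]] sq nz])
    then obtain D where D: "DERIV (\<lambda>u. arccos u / sqrt (1 - u^2)) u0 :> D" by blast
    have Dp: "DERIV phi u0 :> D"
      by (rule has_field_derivative_transform_within_open[OF D, of "{-1<..<1}"]) (use lt in \<open>auto simp: u0_def phi_def\<close>)
    have dp: "((\<lambda>s. phi (r s $ 1)) has_real_derivative D * (r' $ 1)) (at t within {0..})"
      using DERIV_chain'[OF d1[unfolded has_real_derivative_iff_has_vector_derivative[symmetric]] Dp[unfolded u0_def]] .
    show ?thesis by (rule exI, rule has_vector_derivative_scaleR[OF dp dim])
  qed
  then obtain l' where "((\<lambda>s. phi (r s $ 1) *\<^sub>R qim3 (r s)) has_vector_derivative l') (at t within {0..})" by blast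
  then have "((\<lambda>s. qlog3 (r s)) has_vector_derivative l') (at t within {0..})"
  proof (rule has_vector_derivative_transform[rotated 2])
    show "t \<in> {0..}" using t by simp
    show "qlog3 (r s) = phi (r s $ 1) *\<^sub>R qim3 (r s)" if "s \<in> {0..}" for s
      using eq[OF that] .
  qed
  then show ?thesis by blast
qed


lemma log_deriv:
  assumes r: "\<And>s. 0 \<le> s \<Longrightarrow> norm (r s) = 1 \<and> r s $ 1 \<noteq> -1"
    and dr: "(r has_vector_derivative r') (at t within {0..})" and t: "0 \<le> t"
  obtains l' where "((\<lambda>s. qlog3 (r s)) has_vector_derivative l') (at t within {0..})"
    "Dexp (qlog3 (r t)) l' = r'"
proof -
  obtain l' where l': "((\<lambda>s. qlog3 (r s)) has_vector_derivative l') (at t within {0..})"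
    using log_deriv_exists[OF r dr t] by blast
  have "((\<lambda>s. qexp3 (qlog3 (r s))) has_derivative (\<lambda>x. Dexp (qlog3 (r t)) (x *\<^sub>R l'))) (at t within {0..})"
    by (rule has_derivative_compose[OF l'[unfolded has_vector_derivative_def] qexp3_deriv])
  then have "((\<lambda>s. qexp3 (qlog3 (r s))) has_vector_derivative Dexp (qlog3 (r t)) l') (at t within {0..})"
    unfolding has_vector_derivative_def using linear_scale[OF bounded_linear.linear[OF bl_Dexp]]
    by simp
  then have "(r has_vector_derivative Dexp (qlog3 (r t)) l') (at t within {0..})"
  proof (rule has_vector_derivative_transform[rotated 2])
    show "t \<in> {0..}" using t by simp
    show "r s = qexp3 (qlog3 (r s))" if "s \<in> {0..}" for s
      using r[of s] that qexp3_qlog3[of "r s"] by simp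
  qed
  then have "Dexp (qlog3 (r t)) l' = r'"
    by (rule vector_derivative_unique_within[OF at_Ici_nonbot[OF t] _ dr])
  then show ?thesis using that l' by blast
qed


lemma qconj_minus: "qconj (- a) = - qconj a" by (simp add: vec4_eq_iff)
lemma qconj_add: "qconj (a + b) = qconj a + qconj b" by (simp add: vec4_eq_iff)
lemma qmult_minus_left: "qmult (- a) b = - qmult a b" by (simp add: vec4_eq_iff)
lemma qmult_minus_right: "qmult a (- b) = - qmult a b" by (simp add: vec4_eq_iff)

lemma bl_qconj: "bounded_linear qconj"
  by (rule linear_conv_bounded_linear[THEN iffD1]) (simp add: linear_iff vec4_eq_iff)

lemma bbl_qmult: "bounded_bilinear qmult"
proof -
  have "bilinear qmult"
    unfolding bilinear_def by (auto simp: linear_iff qmult_add_left qmult_add_right qmult_scaleR_left qmult_scaleR_right)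
  then show ?thesis by (rule bilinear_conv_bounded_bilinear[THEN iffD1])
qed

lemma bl_dqmult_right: "bounded_linear (\<lambda>z. dq_mult z c)"
  by (rule linear_conv_bounded_linear[THEN iffD1])
     (auto simp: linear_iff dq_mult_def qmult_add_left qmult_scaleR_left scaleR_add_right)

lemma dq_mult_minus_left: "dq_mult (- z) c = - dq_mult z c"
  using linear_neg[OF bounded_linear.linear[OF bl_dqmult_right]] by simp

lemma xc_unit:
  assumes "closed_loop_solution a \<delta> x" "\<And>i. unit_dq (\<delta> i)" "0 \<le> s"
  shows "unit_dq (xc \<delta> x i s)" "norm (fst (xc \<delta> x i s)) = 1" "fst (xc \<delta> x i s) $ 1 \<noteq> -1"
proof -
  show u: "unit_dq (xc \<delta> x i s)" unfolding xc_def
    using assms unit_dq_mult unit_dq_conj by (auto simp: closed_loop_solution_def)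
  show n: "norm (fst (xc \<delta> x i s)) = 1" by (rule unit_norm[OF u])
  show "fst (xc \<delta> x i s) $ 1 \<noteq> -1"
    using unit_r1_neq[OF n] assms by (auto simp: closed_loop_solution_def)
qed

lemma xc_deriv:
  assumes sol: "closed_loop_solution a \<delta> x" and ud: "\<And>i. unit_dq (\<delta> i)" and t: "0 \<le> t"
  shows "((\<lambda>s. xc \<delta> x i s) has_vector_derivative
     - Q8 (xc \<delta> x i t) (\<Sum>j\<in>UNIV. a i j *\<^sub>R (yc \<delta> x i t - yc \<delta> x j t))) (at t within {0..})"
proof -
  define w where "w = Q8 (xc \<delta> x i t) (\<Sum>j\<in>UNIV. a i j *\<^sub>R (yc \<delta> x i t - yc \<delta> x j t))"
  have dx: "(x i has_vector_derivative - H8minus (\<delta> i) w) (at t within {0..})"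
    using sol t by (simp add: closed_loop_solution_def protocol_def w_def)
  have "((\<lambda>s. dq_mult (x i s) (dq_conj (\<delta> i))) has_vector_derivative dq_mult (- H8minus (\<delta> i) w) (dq_conj (\<delta> i))) (at t within {0..})"
    by (rule bounded_linear.has_vector_derivative[OF bl_dqmult_right dx])
  moreover have "dq_mult (- H8minus (\<delta> i) w) (dq_conj (\<delta> i)) = - w"
    unfolding dq_mult_minus_left H8minus_eq dq_mult_assoc
    using ud[of i] by (simp add: unit_dq_iff)
  ultimately show ?thesis by (simp add: xc_def w_def)
qed


lemma fst_yc: "fst (yc \<delta> x i s) = qlog3 (fst (xc \<delta> x i s))"
  by (simp add: yc_def dq_log6_def)
lemma snd_yc: "snd (yc \<delta> x i s) = qim3 (qmult (snd (xc \<delta> x i s)) (qconj (fst (xc \<delta> x i s))))"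
  by (simp add: yc_def dq_log6_def)

lemma fst_Q8: "fst (Q8 X v) = Dexp (qlog3 (fst X)) (fst v)"
  by (simp add: Q8_def Let_def Qmat_eq)
lemma snd_Q8: "snd (Q8 X v) = qmult (qmult (snd X) (qconj (fst X))) (Dexp (qlog3 (fst X)) (fst v)) + qmult (pure4 (snd v)) (fst X)"
  by (simp add: Q8_def Let_def Qmat_eq H4plus_def H4minus_def qmult_scaleR_left)

lemma rot_deriv:
  assumes sol: "closed_loop_solution a \<delta> x" and ud: "\<And>i. unit_dq (\<delta> i)" and t: "0 \<le> t"
  shows "((\<lambda>s. fst (yc \<delta> x i s)) has_vector_derivative
     - fst (\<Sum>j\<in>UNIV. a i j *\<^sub>R (yc \<delta> x i t - yc \<delta> x j t))) (at t within {0..})"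
proof -
  define V where "V = (\<Sum>j\<in>UNIV. a i j *\<^sub>R (yc \<delta> x i t - yc \<delta> x j t))"
  define R where "R = (\<lambda>s. fst (xc \<delta> x i s))"
  have dR: "(R has_vector_derivative - Dexp (qlog3 (R t)) (fst V)) (at t within {0..})"
    using bounded_linear.has_vector_derivative[OF bounded_linear_fst xc_deriv[OF sol ud t, of i]]
    by (simp add: R_def V_def fst_Q8)
  have hyp: "\<And>s. 0 \<le> s \<Longrightarrow> norm (R s) = 1 \<and> R s $ 1 \<noteq> -1"
    using xc_unit[OF sol ud] by (simp add: R_def)
  obtain l' where l': "((\<lambda>s. qlog3 (R s)) has_vector_derivative l') (at t within {0..})"
    "Dexp (qlog3 (R t)) l' = - Dexp (qlog3 (R t)) (fst V)"
    using log_deriv[OF hyp dR t] by blast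
  have "Dexp (qlog3 (R t)) (l' + fst V) = 0"
    using l'(2) linear_add[OF bounded_linear.linear[OF bl_Dexp]] by simp
  then have "l' + fst V = 0"
    by (rule Dexp_inj[rotated]) (use norm_qlog3_lt hyp[OF t] in auto)
  then have "l' = - fst V" by (simp add: eq_neg_iff_add_eq_0)
  then show ?thesis using l'(1) by (simp add: fst_yc R_def V_def)
qed

lemma tr_deriv:
  assumes sol: "closed_loop_solution a \<delta> x" and ud: "\<And>i. unit_dq (\<delta> i)" and t: "0 \<le> t"
  shows "((\<lambda>s. snd (yc \<delta> x i s)) has_vector_derivative
     - snd (\<Sum>j\<in>UNIV. a i j *\<^sub>R (yc \<delta> x i t - yc \<delta> x j t))) (at t within {0..})"
proof -
  define V where "V = (\<Sum>j\<in>UNIV. a i j *\<^sub>R (yc \<delta> x i t - yc \<delta> x j t))"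
  define X where "X = (\<lambda>s. xc \<delta> x i s)"
  define R where "R = (\<lambda>s. fst (X s))"
  define P where "P = (\<lambda>s. qmult (snd (X s)) (qconj (R s)))"
  define Rd where "Rd = Dexp (qlog3 (R t)) (fst V)"
  have dX: "(X has_vector_derivative - Q8 (X t) V) (at t within {0..})"
    using xc_deriv[OF sol ud t, of i] by (simp add: X_def V_def)
  have dR: "(R has_vector_derivative - Rd) (at t within {0..})"
    using bounded_linear.has_vector_derivative[OF bounded_linear_fst dX]
    by (simp add: R_def Rd_def fst_Q8)
  have dS: "((\<lambda>s. snd (X s)) has_vector_derivative - (qmult (P t) Rd + qmult (pure4 (snd V)) (R t))) (at t within {0..})"
    using bounded_linear.has_vector_derivative[OF bounded_linear_snd dX]
    by (simp add: R_def Rd_def P_def snd_Q8)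
  have dC: "((\<lambda>s. qconj (R s)) has_vector_derivative qconj (- Rd)) (at t within {0..})"
    by (rule bounded_linear.has_vector_derivative[OF bl_qconj dR])
  have dP: "(P has_vector_derivative qmult (snd (X t)) (qconj (- Rd)) + qmult (- (qmult (P t) Rd + qmult (pure4 (snd V)) (R t))) (qconj (R t))) (at t within {0..})"
    using bounded_bilinear.has_vector_derivative[OF bbl_qmult dS dC] unfolding P_def by simp
  have unitX: "unit_dq (X s)" "norm (R s) = 1" if "0 \<le> s" for s
    using xc_unit[OF sol ud that] by (simp_all add: X_def R_def)
  have RR: "qmult (R s) (qconj (R s)) = qone" if "0 \<le> s" for s
    using qmult_qconj_self[of "R s"] unitX(2)[OF that] by simp
  have dRR: "((\<lambda>s. qmult (R s) (qconj (R s))) has_vector_derivative qmult (R t) (qconj (- Rd)) + qmult (- Rd) (qconj (R t))) (at t within {0..})"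
    by (rule bounded_bilinear.has_vector_derivative[OF bbl_qmult dR dC])
  have "((\<lambda>s. qmult (R s) (qconj (R s))) has_vector_derivative 0) (at t within {0..})"
  proof (rule has_vector_derivative_transform[rotated 2])
    show "((\<lambda>s. qone) has_vector_derivative 0) (at t within {0..})" by simp
    show "t \<in> {0..}" using t by simp
    show "qmult (R s) (qconj (R s)) = qone" if "s \<in> {0..}" for s using RR that by simp
  qed
  then have E: "qmult (R t) (qconj (- Rd)) + qmult (- Rd) (qconj (R t)) = 0"
    using vector_derivative_unique_within[OF at_Ici_nonbot[OF t] dRR] by simp
  have SX: "snd (X t) = qmult (P t) (R t)"
  proof -
    have "snd (X t) = qmult (pure4 (qim3 (P t))) (R t)"
      using unit_snd_repr[OF unitX(1)[OF t]] by (simp add: P_def R_def)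
    moreover have "pure4 (qim3 (P t)) = P t"
      using unit_re_zero[OF unitX(1)[OF t]] by (simp add: pure4_qim3 P_def R_def)
    ultimately show ?thesis by simp
  qed
  have "qmult (snd (X t)) (qconj (- Rd)) + qmult (- (qmult (P t) Rd + qmult (pure4 (snd V)) (R t))) (qconj (R t))
      = qmult (P t) (qmult (R t) (qconj (- Rd)) + qmult (- Rd) (qconj (R t))) - qmult (pure4 (snd V)) (qmult (R t) (qconj (R t)))"
    unfolding SX by (simp add: vec4_eq_iff algebra_simps)
  also have "\<dots> = - pure4 (snd V)" using E RR[OF t] by simp
  finally have "(P has_vector_derivative - pure4 (snd V)) (at t within {0..})" using dP by simp
  then have "((\<lambda>s. qim3 (P s)) has_vector_derivative qim3 (- pure4 (snd V))) (at t within {0..})"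
    by (rule bounded_linear.has_vector_derivative[OF bl_qim3])
  moreover have "qim3 (- pure4 (snd V)) = - snd V" by (simp add: vec3_eq_iff)
  ultimately show ?thesis by (simp add: snd_yc P_def X_def R_def V_def)
qed


lemma barrier:
  fixes g g' :: "'m::finite \<Rightarrow> real \<Rightarrow> real"
  assumes cont: "\<And>i. continuous_on {ta..tb} (g i)"
    and der: "\<And>i t. ta < t \<Longrightarrow> t \<le> tb \<Longrightarrow> (g i has_real_derivative g' i t) (at t)"
    and init: "\<And>i. g i ta < 0"
    and cond: "\<And>i t. ta < t \<Longrightarrow> t \<le> tb \<Longrightarrow> g i t = 0 \<Longrightarrow> (\<And>j. g j t \<le> 0) \<Longrightarrow> g' i t < 0"
    and t: "ta \<le> t" "t \<le> tb"
  shows "g i t < 0"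
proof (rule ccontr)
  assume nt: "\<not> g i t < 0"
  define Z where "Z = (\<Union>j. {s \<in> {ta..tb}. (\<lambda>s. 0) s \<le> g j s})"
  have clj: "closed {s \<in> {ta..tb}. (\<lambda>s. 0) s \<le> g j s}" for j
    by (rule continuous_on_closed_Collect_le[OF continuous_on_const cont]) simp
  have cl: "closed Z" unfolding Z_def
    by (rule closed_UN) (use clj in auto)
  have tZ: "t \<in> Z" unfolding Z_def using t nt by (simp add: not_less) blast
  have bb: "bdd_below Z" unfolding Z_def by (intro bdd_belowI[of _ ta]) auto
  define ts where "ts = Inf Z"
  have tsZ: "ts \<in> Z" unfolding ts_def using closed_contains_Inf[OF _ bb cl] tZ by auto
  have low: "\<And>s. s \<in> Z \<Longrightarrow> ts \<le> s" unfolding ts_def using bb by (simp add: cInf_lower)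
  obtain i0 where i0: "0 \<le> g i0 ts" "ta \<le> ts" "ts \<le> tb" using tsZ unfolding Z_def by auto
  have "ts \<noteq> ta" using i0 init[of i0] by auto
  then have lt: "ta < ts" using i0 by simp
  have below: "g j s < 0" if "ta \<le> s" "s < ts" for j s
  proof (rule ccontr)
    assume "\<not> g j s < 0"
    then have "s \<in> Z" using that i0 unfolding Z_def by (simp add: not_less) (blast intro: order.trans)
    then show False using low[of s] that by simp
  qed
  have contsub: "continuous_on {ta..ts} (g j)" for j
    by (rule continuous_on_subset[OF cont]) (use i0 in auto)
  have zero: "g i0 ts = 0"
  proof -
    obtain z where z: "ta \<le> z" "z \<le> ts" "g i0 z = 0"
      using IVT'[of "g i0" ta 0 ts, OF _ i0(1) _ contsub] init[of i0] lt by auto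
    have "z = ts" using below[of z i0] z by force
    then show ?thesis using z by simp
  qed
  have allle: "g j ts \<le> 0" for j
  proof (rule ccontr)
    assume "\<not> g j ts \<le> 0"
    then obtain z where z: "ta \<le> z" "z \<le> ts" "g j z = 0"
      using IVT'[of "g j" ta 0 ts, OF _ _ _ contsub] init[of j] lt by auto
    have "z \<noteq> ts" using z \<open>\<not> g j ts \<le> 0\<close> by auto
    then show False using below[of z j] z by simp
  qed
  have neg: "g' i0 ts < 0" using cond[OF lt i0(3) zero allle] .
  obtain d where d: "d > 0" "\<And>h. h > 0 \<Longrightarrow> h < d \<Longrightarrow> g i0 ts < g i0 (ts - h)"
    using DERIV_neg_dec_left[OF der[OF lt i0(3)] neg] by auto
  define h where "h = min (d/2) ((ts - ta)/2)"
  have h: "h > 0" "h < d" using d lt by (auto simp: h_def)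
  have "g i0 ts < g i0 (ts - h)" using d(2)[OF h] .
  moreover have "ta \<le> ts - h" using lt min.cobounded2[of "d/2" "(ts-ta)/2"] by (simp add: h_def)
  then have "g i0 (ts - h) < 0" using below[of "ts - h" i0] h by simp
  ultimately show False using zero by simp
qed

locale consensus =
  fixes a :: "'n::finite \<Rightarrow> 'n \<Rightarrow> real" and y :: "'n \<Rightarrow> real \<Rightarrow> real"
  assumes nonneg: "\<And>i j. a i j \<ge> 0"
    and ode: "\<And>i t. 0 \<le> t \<Longrightarrow> (y i has_real_derivative (\<Sum>j\<in>UNIV. a i j * (y j t - y i t))) (at t within {0..})"
begin

definition dy where "dy i t = (\<Sum>j\<in>UNIV. a i j * (y j t - y i t))"

lemma ode_at: "0 < t \<Longrightarrow> (y i has_real_derivative dy i t) (at t)"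
  using ode[of t i] at_within_interior[of t "{0..}"] by (simp add: dy_def)

lemma cont: "0 \<le> t0 \<Longrightarrow> continuous_on {t0..t1} (y i)"
  unfolding continuous_on_eq_continuous_within
proof
  fix t assume "0 \<le> t0" "t \<in> {t0..t1}"
  then have "continuous (at t within {0..}) (y i)" using ode[of t i] DERIV_continuous by auto
  then show "continuous (at t within {t0..t1}) (y i)"
    by (rule continuous_within_subset) (use \<open>0 \<le> t0\<close> in auto)
qed

lemma neg_consensus: "consensus a (\<lambda>i t. - y i t)"
proof
  show "\<And>i j. a i j \<ge> 0" by (rule nonneg)
  fix i t assume "0 \<le> (t::real)"
  have "((\<lambda>t. - y i t) has_real_derivative - (\<Sum>j\<in>UNIV. a i j * (y j t - y i t))) (at t within {0..})"
    using ode[OF \<open>0 \<le> t\<close>] by (rule DERIV_minus)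
  moreover have "- (\<Sum>j\<in>UNIV. a i j * (y j t - y i t)) = (\<Sum>j\<in>UNIV. a i j * (- y j t - - y i t))"
    by (simp add: sum_negf[symmetric] algebra_simps)
  ultimately show "((\<lambda>t. - y i t) has_real_derivative (\<Sum>j\<in>UNIV. a i j * (- y j t - - y i t))) (at t within {0..})"
    by simp
qed

lemma dy_le: assumes "\<And>j. y j t \<le> y i t" shows "dy i t \<le> 0"
  unfolding dy_def by (rule sum_nonpos) (use assms nonneg in \<open>simp add: mult_nonneg_nonpos\<close>)

lemma invariance_upper:
  assumes s: "0 \<le> s" "s \<le> t" and B: "\<And>j. y j s \<le> B"
  shows "y i t \<le> B"
proof (rule ccontr)
  assume "\<not> y i t \<le> B"
  define e where "e = (y i t - B) / (2 * (1 + t - s))"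
  have e: "e > 0" using \<open>\<not> y i t \<le> B\<close> s by (simp add: e_def)
  have "(\<lambda>j \<tau>. y j \<tau> - B - e * (1 + \<tau> - s)) i t < 0"
  proof (rule barrier[where g = "\<lambda>j \<tau>. y j \<tau> - B - e * (1 + \<tau> - s)" and g' = "\<lambda>j \<tau>. dy j \<tau> - e" and ta = s and tb = t])
    show "continuous_on {s..t} (\<lambda>\<tau>. y j \<tau> - B - e * (1 + \<tau> - s))" for j
      by (intro continuous_intros cont s)
    show "((\<lambda>\<tau>. y j \<tau> - B - e * (1 + \<tau> - s)) has_real_derivative dy j \<tau> - e) (at \<tau>)"
      if "s < \<tau>" "\<tau> \<le> t" for j \<tau>
    proof -
      have "((\<lambda>\<tau>. y j \<tau> - B - e * (1 + \<tau> - s)) has_real_derivative dy j \<tau> - 0 - e * (0 + 1 - 0)) (at \<tau>)"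
        by (intro DERIV_diff DERIV_cmult DERIV_add DERIV_const DERIV_ident ode_at) (use that s in linarith)
      then show ?thesis by simp
    qed
    show "y j s - B - e * (1 + s - s) < 0" for j using B[of j] e by simp
    show "dy j \<tau> - e < 0" if "s < \<tau>" "\<tau> \<le> t" "y j \<tau> - B - e * (1 + \<tau> - s) = 0"
      and "\<And>l. y l \<tau> - B - e * (1 + \<tau> - s) \<le> 0" for j \<tau>
    proof -
      have "y l \<tau> \<le> y j \<tau>" for l using that(3) that(4)[of l] by linarith
      then have "dy j \<tau> \<le> 0" by (intro dy_le)
      then show ?thesis using e by simp
    qed
  qed (use s in auto)
  moreover have "e * (1 + t - s) = (y i t - B) / 2" using s by (simp add: e_def field_simps)
  ultimately show False using \<open>\<not> y i t \<le> B\<close> by simp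
qed

end


context consensus begin

lemma decay:
  assumes s: "0 \<le> t0" "t0 \<le> t1" and D: "D > 0"
    and db: "\<And>\<tau>. t0 < \<tau> \<Longrightarrow> \<tau> \<le> t1 \<Longrightarrow> dy i \<tau> \<le> D * (Mx - y i \<tau>) - \<gamma>"
    and init: "y i t0 \<le> Mx - c0"
    and tau: "t0 \<le> \<tau>" "\<tau> \<le> t1"
  shows "y i \<tau> \<le> Mx - (c0 * exp (- D * (\<tau> - t0)) + \<gamma> / D * (1 - exp (- D * (\<tau> - t0))))"
proof (rule ccontr)
  define b where "b \<tau> = c0 * exp (- D * (\<tau> - t0)) + \<gamma> / D * (1 - exp (- D * (\<tau> - t0)))" for \<tau>
  assume "\<not> ?thesis"
  then have gt: "y i \<tau> > Mx - b \<tau>" by (simp add: b_def)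
  define e where "e = (y i \<tau> - (Mx - b \<tau>)) / 2"
  have e: "e > 0" using gt by (simp add: e_def)
  have db': "(b has_real_derivative (\<gamma> - D * c0) * exp (- D * (\<tau> - t0))) (at \<tau>)" for \<tau>
  proof -
    have "(b has_real_derivative c0 * (exp (- D * (\<tau> - t0)) * (- D * (1 - 0))) + \<gamma> / D * (0 - exp (- D * (\<tau> - t0)) * (- D * (1 - 0)))) (at \<tau>)"
      unfolding b_def
      by (intro DERIV_add DERIV_cmult DERIV_diff DERIV_const DERIV_fun_exp DERIV_ident)
    then show ?thesis using D by (simp add: algebra_simps)
  qed
  have "(\<lambda>(_::unit) \<tau>. y i \<tau> - Mx + b \<tau> - e) () \<tau> < 0"
  proof (rule barrier[where g = "\<lambda>_ \<tau>. y i \<tau> - Mx + b \<tau> - e" and g' = "\<lambda>_ \<tau>. dy i \<tau> + (\<gamma> - D * c0) * exp (- D * (\<tau> - t0))" and ta = t0 and tb = t1])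
    show "continuous_on {t0..t1} (\<lambda>\<tau>. y i \<tau> - Mx + b \<tau> - e)"
      unfolding b_def by (intro continuous_intros cont s)
    show "((\<lambda>\<tau>. y i \<tau> - Mx + b \<tau> - e) has_real_derivative dy i \<tau> + (\<gamma> - D * c0) * exp (- D * (\<tau> - t0))) (at \<tau>)"
      if "t0 < \<tau>" "\<tau> \<le> t1" for \<tau>
    proof -
      have "((\<lambda>\<tau>. y i \<tau> - Mx + b \<tau> - e) has_real_derivative dy i \<tau> - 0 + (\<gamma> - D * c0) * exp (- D * (\<tau> - t0)) - 0) (at \<tau>)"
        by (intro DERIV_diff DERIV_add DERIV_const db' ode_at) (use that s in linarith)
      then show ?thesis by simp
    qed
    show "y i t0 - Mx + b t0 - e < 0" using init e by (simp add: b_def)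
    show "dy i \<tau> + (\<gamma> - D * c0) * exp (- D * (\<tau> - t0)) < 0"
      if "t0 < \<tau>" "\<tau> \<le> t1" "y i \<tau> - Mx + b \<tau> - e = 0" for \<tau>
    proof -
      have yy: "Mx - y i \<tau> = b \<tau> - e" using that(3) by simp
      have "dy i \<tau> \<le> D * (b \<tau> - e) - \<gamma>" using db[OF that(1,2)] yy by simp
      moreover have "D * b \<tau> = D * c0 * exp (- D * (\<tau> - t0)) + \<gamma> - \<gamma> * exp (- D * (\<tau> - t0))"
        using D by (simp add: b_def algebra_simps)
      moreover have "D * e > 0" using D e by simp
      ultimately show ?thesis by (simp add: algebra_simps)
    qed
  qed (use tau in auto)
  then show False using e by (simp add: e_def)
qed

lemma dy_child:
  assumes up: "\<And>j. y j \<tau> \<le> Mx" and p: "y p \<tau> \<le> Mx - c" and c: "c \<ge> 0"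
    and al: "a i p \<ge> \<alpha>" and row: "(\<Sum>j\<in>UNIV. a i j) \<le> D"
  shows "dy i \<tau> \<le> D * (Mx - y i \<tau>) - \<alpha> * c"
proof -
  have "dy i \<tau> = (\<Sum>j\<in>UNIV. a i j * (y j \<tau> - Mx)) + (\<Sum>j\<in>UNIV. a i j) * (Mx - y i \<tau>)"
    unfolding dy_def sum_distrib_right sum.distrib[symmetric] by (rule sum.cong) (auto simp: algebra_simps)
  moreover have "(\<Sum>j\<in>UNIV. a i j * (y j \<tau> - Mx)) \<le> a i p * (y p \<tau> - Mx)"
  proof -
    have "(\<Sum>j\<in>UNIV. a i j * (y j \<tau> - Mx)) = a i p * (y p \<tau> - Mx) + (\<Sum>j\<in>UNIV - {p}. a i j * (y j \<tau> - Mx))"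
      by (simp add: sum.remove)
    moreover have "(\<Sum>j\<in>UNIV - {p}. a i j * (y j \<tau> - Mx)) \<le> 0"
      by (rule sum_nonpos) (use up nonneg in \<open>simp add: mult_nonneg_nonpos\<close>)
    ultimately show ?thesis by simp
  qed
  moreover have "a i p * (y p \<tau> - Mx) \<le> - (\<alpha> * c)"
  proof -
    have "a i p * (y p \<tau> - Mx) \<le> a i p * (- c)" using p nonneg[of i p] by (intro mult_left_mono) auto
    moreover have "\<alpha> * c \<le> a i p * c" using al c by (intro mult_right_mono) auto
    ultimately show ?thesis by simp
  qed
  moreover have "(\<Sum>j\<in>UNIV. a i j) * (Mx - y i \<tau>) \<le> D * (Mx - y i \<tau>)"
    using row up[of i] by (intro mult_right_mono) auto
  ultimately show ?thesis by simp
qed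

lemma invariance_lower:
  assumes s: "0 \<le> s" "s \<le> t" and B: "\<And>j. B \<le> y j s"
  shows "B \<le> y i t"
proof -
  have "- y i t \<le> - B"
    by (rule consensus.invariance_upper[OF neg_consensus s]) (use B in auto)
  then show ?thesis by simp
qed

end

definition dep :: "('n \<Rightarrow> 'n) \<Rightarrow> 'n \<Rightarrow> 'n \<Rightarrow> nat" where
  "dep par k i = (LEAST m. (par ^^ m) i = k)"
definition Nd :: "('n::finite \<Rightarrow> 'n) \<Rightarrow> 'n \<Rightarrow> nat" where
  "Nd par k = Max (range (dep par k))"
definition Dc :: "('n::finite \<Rightarrow> 'n \<Rightarrow> real) \<Rightarrow> real" where
  "Dc a = 1 + (\<Sum>i\<in>UNIV. \<Sum>j\<in>UNIV. a i j)"
definition alph :: "('n::finite \<Rightarrow> 'n \<Rightarrow> real) \<Rightarrow> 'n \<Rightarrow> ('n \<Rightarrow> 'n) \<Rightarrow> real" where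
  "alph a k par = Min (insert 1 ((\<lambda>i. a i (par i)) ` {i. i \<noteq> k}))"
definition rho :: "('n::finite \<Rightarrow> 'n \<Rightarrow> real) \<Rightarrow> 'n \<Rightarrow> ('n \<Rightarrow> 'n) \<Rightarrow> real" where
  "rho a k par = alph a k par / Dc a * (1 - exp (- Dc a))"
definition kappa :: "('n::finite \<Rightarrow> 'n \<Rightarrow> real) \<Rightarrow> 'n \<Rightarrow> ('n \<Rightarrow> 'n) \<Rightarrow> real" where
  "kappa a k par = rho a k par ^ Nd par k * exp (- Dc a * Nd par k) / 2"

locale consensus_tree = consensus a y for a :: "'n::finite \<Rightarrow> 'n \<Rightarrow> real" and y +
  fixes k :: 'n and par :: "'n \<Rightarrow> 'n"
  assumes tree_edge: "\<And>i. i \<noteq> k \<Longrightarrow> a i (par i) > 0"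
    and tree_reach: "\<And>i. \<exists>m. (par ^^ m) i = k"
begin

lemma dep_k: "(par ^^ dep par k i) i = k"
  unfolding dep_def by (rule LeastI_ex[OF tree_reach])

lemma dep_0: "dep par k i = 0 \<Longrightarrow> i = k"
  using dep_k[of i] by simp

lemma dep_par: assumes "i \<noteq> k" shows "dep par k (par i) < dep par k i"
proof -
  have "dep par k i \<noteq> 0" using dep_0 assms by auto
  then obtain n where n: "dep par k i = Suc n" by (cases "dep par k i") auto
  have "(par ^^ n) (par i) = k" using dep_k[of i] unfolding n funpow_Suc_right by simp
  then have "dep par k (par i) \<le> n" unfolding dep_def by (rule Least_le)
  then show ?thesis using n by simp
qed

lemma dep_le_N: "dep par k i \<le> Nd par k"
  unfolding Nd_def by (rule Max_ge) auto

lemma Dc_pos: "Dc a > 0" and Dc_ge1: "Dc a \<ge> 1"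
proof -
  have "(\<Sum>i\<in>UNIV. \<Sum>j\<in>UNIV. a i j) \<ge> 0" by (intro sum_nonneg) (use nonneg in auto)
  then show "Dc a > 0" "Dc a \<ge> 1" by (auto simp: Dc_def)
qed

lemma row_le: "(\<Sum>j\<in>UNIV. a i j) \<le> Dc a"
proof -
  have "(\<Sum>j\<in>UNIV. a i j) \<le> (\<Sum>i\<in>UNIV. \<Sum>j\<in>UNIV. a i j)"
    by (rule member_le_sum) (auto intro!: sum_nonneg simp: nonneg)
  then show ?thesis by (simp add: Dc_def)
qed

lemma alph: "0 < alph a k par" "alph a k par \<le> 1" "i \<noteq> k \<Longrightarrow> alph a k par \<le> a i (par i)"
proof -
  have fin: "finite (insert 1 ((\<lambda>i. a i (par i)) ` {i. i \<noteq> k}))" by simp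
  show "0 < alph a k par" unfolding alph_def using tree_edge by (subst Min_gr_iff) auto
  show "alph a k par \<le> 1" unfolding alph_def by (rule Min_le[OF fin]) simp
  show "i \<noteq> k \<Longrightarrow> alph a k par \<le> a i (par i)" unfolding alph_def by (rule Min_le[OF fin]) auto
qed

lemma rho: "0 < rho a k par" "rho a k par \<le> 1"
proof -
  have e: "exp (- Dc a) < 1" "exp (- Dc a) > 0" using Dc_pos by auto
  show "0 < rho a k par" unfolding rho_def using alph Dc_pos e by simp
  have "alph a k par / Dc a \<le> 1" using alph Dc_ge1 by simp
  moreover have "1 - exp (- Dc a) \<le> 1" using e by simp
  ultimately show "rho a k par \<le> 1" unfolding rho_def using alph Dc_pos e
    by (metis mult_le_one less_eq_real_def diff_gt_0_iff_gt divide_nonneg_pos)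
qed

lemma kappa: "0 < kappa a k par" "kappa a k par \<le> 1/2"
proof -
  have "rho a k par ^ Nd par k \<le> 1" using rho by (simp add: power_le_one)
  moreover have "exp (- Dc a * Nd par k) \<le> 1" using Dc_pos by simp
  ultimately have "rho a k par ^ Nd par k * exp (- Dc a * Nd par k) \<le> 1"
    by (metis mult_le_one exp_ge_zero rho(1) less_eq_real_def zero_le_power)
  then show "kappa a k par \<le> 1/2" by (simp add: kappa_def)
  show "0 < kappa a k par" using rho by (simp add: kappa_def)
qed

lemma contract_upper:
  assumes s: "0 \<le> s" and up: "\<And>j. y j s \<le> Mx" and root: "y k s \<le> Mx - (Mx - mn) / 2"
    and Dl: "mn \<le> Mx"
  shows "y i (s + Nd par k) \<le> Mx - kappa a k par * (Mx - mn)"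
proof -
  define N where "N = Nd par k"
  define D where "D = Dc a"
  define R where "R = rho a k par"
  define C where "C m = (Mx - mn) / 2 * exp (- D * N) * R ^ m" for m
  have D: "D > 0" "D \<ge> 1" using Dc_pos Dc_ge1 by (auto simp: D_def)
  have inv: "y j \<tau> \<le> Mx" if "s \<le> \<tau>" for j \<tau> by (rule invariance_upper[OF s that up])
  have C0: "C m \<ge> 0" for m using Dl rho by (simp add: C_def R_def)
  have Cdec: "C m \<le> C 0" for m
  proof -
    have "R ^ m \<le> 1" using rho by (simp add: R_def power_le_one)
    then show ?thesis unfolding C_def using Dl
      by (simp add: mult_left_le)
  qed
  have rootb: "y k \<tau> \<le> Mx - C 0" if "s \<le> \<tau>" "\<tau> \<le> s + N" for \<tau>
  proof -
    have "y k \<tau> \<le> Mx - ((Mx - mn) / 2 * exp (- D * (\<tau> - s)) + 0 / D * (1 - exp (- D * (\<tau> - s))))"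
    proof (rule decay[OF s _ D(1) _ root that(1)])
      show "s \<le> s + N" by simp
      show "\<tau> \<le> s + N" using that by simp
      show "dy k t \<le> D * (Mx - y k t) - 0" if "s < t" "t \<le> s + N" for t
        using dy_child[where \<tau>=t and Mx=Mx and p=k and c=0 and i=k and \<alpha>=0 and D=D] inv that row_le[of k] nonneg[of k k] by (simp add: D_def)
    qed
    moreover have "exp (- D * N) \<le> exp (- D * (\<tau> - s))" using that D by simp
    then have "(Mx - mn) / 2 * exp (- D * N) \<le> (Mx - mn) / 2 * exp (- D * (\<tau> - s))"
      using Dl by (intro mult_left_mono) auto
    ultimately show ?thesis unfolding C_def by simp
  qed
  have claim: "m \<le> N \<Longrightarrow> dep par k i \<le> m \<Longrightarrow> s + m \<le> \<tau> \<Longrightarrow> \<tau> \<le> s + N \<Longrightarrow> y i \<tau> \<le> Mx - C m" for m i \<tau>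
  proof (induction m arbitrary: i \<tau>)
    case 0
    then have "i = k" using dep_0 by simp
    then show ?case using rootb 0 by simp
  next
    case (Suc m i \<tau>)
    show ?case
    proof (cases "i = k")
      case True
      then show ?thesis using rootb[of \<tau>] Cdec[of "Suc m"] Suc.prems by simp
    next
      case False
      define p where "p = par i"
      have dp: "dep par k p \<le> m" using dep_par[OF False] Suc.prems(2) by (simp add: p_def)
      have pb: "y p t \<le> Mx - C m" if "s + m \<le> t" "t \<le> s + N" for t
        using Suc.IH[OF _ dp that] Suc.prems(1) by simp
      have al: "alph a k par \<le> a i p" using alph(3)[OF False] by (simp add: p_def)
      have "y i \<tau> \<le> Mx - (0 * exp (- D * (\<tau> - (s + m))) + alph a k par * C m / D * (1 - exp (- D * (\<tau> - (s + m)))))"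
      proof (rule decay)
        show "0 \<le> s + real m" using s by simp
        show "s + real m \<le> s + N" using Suc.prems by simp
        show "D > 0" using D by simp
        show "dy i t \<le> D * (Mx - y i t) - alph a k par * C m" if "s + real m < t" "t \<le> s + N" for t
          by (rule dy_child[OF _ pb C0 al]) (use inv that row_le[of i] in \<open>auto simp: D_def\<close>)
        show "y i (s + real m) \<le> Mx - 0" using inv by simp
        show "s + real m \<le> \<tau>" "\<tau> \<le> s + N" using Suc.prems by auto
      qed
      moreover have "exp (- D * (\<tau> - (s + m))) \<le> exp (- D)"
        using Suc.prems(3) D by simp
      moreover have "alph a k par * C m / D * (1 - exp (- D)) = C (Suc m)"
        by (simp add: C_def R_def rho_def D_def)
      moreover have "alph a k par * C m / D \<ge> 0" using alph C0 D by simp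
      ultimately have "y i \<tau> \<le> Mx - alph a k par * C m / D * (1 - exp (- D))"
        by (smt (verit) mult_left_mono)
      then show ?thesis
        using \<open>alph a k par * C m / D * (1 - exp (- D)) = C (Suc m)\<close> by simp
    qed
  qed
  have "y i (s + N) \<le> Mx - C N" by (rule claim) (auto simp: N_def dep_le_N)
  moreover have "C N = kappa a k par * (Mx - mn)"
    by (simp add: C_def kappa_def N_def D_def R_def)
  ultimately show ?thesis by (simp add: N_def)
qed

end


context consensus_tree begin

lemma neg_tree: "consensus_tree a (\<lambda>i t. - y i t) k par"
  by (intro consensus_tree.intro neg_consensus consensus_tree_axioms.intro tree_edge tree_reach)

lemma contract_lower:
  assumes s: "0 \<le> s" and lo: "\<And>j. mn \<le> y j s" and root: "mn + (Mx - mn) / 2 \<le> y k s"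
    and Dl: "mn \<le> Mx"
  shows "mn + kappa a k par * (Mx - mn) \<le> y i (s + Nd par k)"
proof -
  have "- y i (s + Nd par k) \<le> (- mn) - kappa a k par * ((- mn) - (- Mx))"
    by (rule consensus_tree.contract_upper[OF neg_tree s]) (use lo root Dl in auto)
  then show ?thesis by simp
qed

lemma step:
  assumes s: "0 \<le> s" and b: "\<And>j. mn \<le> y j s" "\<And>j. y j s \<le> Mx"
  shows "\<exists>mn' Mx'. Mx' - mn' \<le> (1 - kappa a k par) * (Mx - mn) \<and>
     (\<forall>j t. s + Nd par k \<le> t \<longrightarrow> mn' \<le> y j t \<and> y j t \<le> Mx')"
proof -
  have Dl: "mn \<le> Mx" using b[of k] by simp
  have s': "0 \<le> s + Nd par k" using s by simp
  show ?thesis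
  proof (cases "y k s \<le> Mx - (Mx - mn) / 2")
    case True
    have u: "y j (s + Nd par k) \<le> Mx - kappa a k par * (Mx - mn)" for j
      by (rule contract_upper[OF s b(2) True Dl])
    have l: "mn \<le> y j (s + Nd par k)" for j by (rule invariance_lower[OF s _ b(1)]) simp
    show ?thesis
      by (rule exI[of _ mn], rule exI[of _ "Mx - kappa a k par * (Mx - mn)"])
        (use invariance_upper[OF s' _ u] invariance_lower[OF s' _ l] in \<open>auto simp: algebra_simps\<close>)
  next
    case False
    then have r: "mn + (Mx - mn) / 2 \<le> y k s" by (simp add: not_le field_simps)
    have l: "mn + kappa a k par * (Mx - mn) \<le> y j (s + Nd par k)" for j
      by (rule contract_lower[OF s b(1) r Dl])
    have u: "y j (s + Nd par k) \<le> Mx" for j by (rule invariance_upper[OF s _ b(2)]) simp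
    show ?thesis
      by (rule exI[of _ "mn + kappa a k par * (Mx - mn)"], rule exI[of _ Mx])
        (use invariance_upper[OF s' _ u] invariance_lower[OF s' _ l] in \<open>auto simp: algebra_simps\<close>)
  qed
qed

lemma iter:
  "\<exists>mn Mx. Mx - mn \<le> (1 - kappa a k par) ^ K * (2 * (\<Sum>j\<in>UNIV. \<bar>y j 0\<bar>)) \<and>
     (\<forall>j t. real K * Nd par k \<le> t \<longrightarrow> mn \<le> y j t \<and> y j t \<le> Mx)"
proof (induction K)
  case 0
  define S where "S = (\<Sum>j\<in>UNIV. \<bar>y j 0\<bar>)"
  have ab: "\<bar>y j 0\<bar> \<le> S" for j unfolding S_def by (rule member_le_sum) auto
  have b: "- S \<le> y j 0" "y j 0 \<le> S" for j using ab[of j] abs_le_iff[of "y j 0" S] by linarith+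
  show ?case
    by (rule exI[of _ "- S"], rule exI[of _ S])
       (use invariance_upper[OF order.refl _ b(2)] invariance_lower[OF order.refl _ b(1)] in \<open>auto simp: S_def\<close>)
next
  case (Suc K)
  then obtain mn Mx where h: "Mx - mn \<le> (1 - kappa a k par) ^ K * (2 * (\<Sum>j\<in>UNIV. \<bar>y j 0\<bar>))"
    "\<And>j t. real K * Nd par k \<le> t \<Longrightarrow> mn \<le> y j t \<and> y j t \<le> Mx" by blast
  have s: "0 \<le> real K * Nd par k" by simp
  obtain mn' Mx' where h': "Mx' - mn' \<le> (1 - kappa a k par) * (Mx - mn)"
    "\<And>j t. real K * Nd par k + Nd par k \<le> t \<Longrightarrow> mn' \<le> y j t \<and> y j t \<le> Mx'"
    using step[OF s, of mn Mx] h(2) by auto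
  have "(1 - kappa a k par) * (Mx - mn) \<le> (1 - kappa a k par) * ((1 - kappa a k par) ^ K * (2 * (\<Sum>j\<in>UNIV. \<bar>y j 0\<bar>)))"
    using h(1) kappa by (intro mult_left_mono) auto
  then have "Mx' - mn' \<le> (1 - kappa a k par) ^ Suc K * (2 * (\<Sum>j\<in>UNIV. \<bar>y j 0\<bar>))"
    using h'(1) by simp
  moreover have "real (Suc K) * Nd par k = real K * Nd par k + Nd par k" by (simp add: algebra_simps)
  ultimately show ?case using h'(2) by auto
qed

lemma converge: "\<exists>c. \<forall>i. (y i \<longlongrightarrow> c) at_top"
proof -
  define q where "q = 1 - kappa a k par"
  define W where "W = 2 * (\<Sum>j\<in>UNIV. \<bar>y j 0\<bar>)"
  have q: "0 < q" "q < 1" using kappa by (auto simp: q_def)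
  have W: "W \<ge> 0" by (simp add: W_def sum_nonneg)
  obtain lo hi where lh: "\<And>K. hi K - lo K \<le> q ^ K * W"
    "\<And>K j t. real K * Nd par k \<le> t \<Longrightarrow> lo K \<le> y j t \<and> y j t \<le> hi K"
    using iter[unfolded q_def[symmetric] W_def[symmetric]] by metis
  have cross: "lo K \<le> hi K'" for K K'
  proof -
    have "lo K \<le> y k (real (max K K') * Nd par k)" using lh(2) by (simp add: mult_right_mono)
    also have "\<dots> \<le> hi K'" using lh(2) by (simp add: mult_right_mono)
    finally show ?thesis .
  qed
  define c where "c = (SUP K. lo K)"
  have bdd: "bdd_above (range lo)" by (intro bdd_aboveI2[where M="hi 0"]) (rule cross)
  have clo: "lo K \<le> c" for K unfolding c_def by (rule cSUP_upper[OF _ bdd]) simp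
  have chi: "c \<le> hi K" for K unfolding c_def by (rule cSUP_least) (auto intro: cross)
  have "(y i \<longlongrightarrow> c) at_top" for i
  proof (rule tendstoI)
    fix e :: real assume e: "e > 0"
    obtain K where K: "q ^ K < e / (W + 1)" using real_arch_pow_inv[of "e / (W + 1)" q] e W q by auto
    have "q ^ K * W \<le> q ^ K * (W + 1)" using q by simp
    also have "\<dots> < e" using K W by (simp add: field_simps)
    finally have qe: "q ^ K * W < e" .
    show "\<forall>\<^sub>F t in at_top. dist (y i t) c < e"
    proof (rule eventually_at_top_linorder[THEN iffD2], intro exI[of _ "real K * Nd par k"] allI impI)
      fix t assume "real K * Nd par k \<le> t"
      then have "lo K \<le> y i t" "y i t \<le> hi K" using lh(2) by auto
      then have "dist (y i t) c \<le> hi K - lo K" using clo[of K] chi[of K] by (simp add: dist_real_def abs_le_iff)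
      then show "dist (y i t) c < e" using lh(1)[of K] qe by simp
    qed
  qed
  then show ?thesis by blast
qed

end


lemma comp_ode:
  assumes "((\<lambda>s. f i s) has_vector_derivative - (\<Sum>j\<in>UNIV. a i j *\<^sub>R (f i t - f j t))) (at t within {0..})"
  shows "((\<lambda>s. f i s $ c) has_real_derivative (\<Sum>j\<in>UNIV. a i j * (f j t $ c - f i t $ c))) (at t within {0..})"
proof -
  have "((\<lambda>s. f i s $ c) has_vector_derivative (- (\<Sum>j\<in>UNIV. a i j *\<^sub>R (f i t - f j t))) $ c) (at t within {0..})"
    by (rule bounded_linear.has_vector_derivative[OF bounded_linear_vec_nth assms])
  moreover have "(- (\<Sum>j\<in>UNIV. a i j *\<^sub>R (f i t - f j t))) $ c = (\<Sum>j\<in>UNIV. a i j * (f j t $ c - f i t $ c))"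
    by (simp add: sum_negf[symmetric] algebra_simps)
  ultimately show ?thesis by (simp add: has_real_derivative_iff_has_vector_derivative)
qed

lemma forward:
  fixes a :: "'n::finite \<Rightarrow> 'n \<Rightarrow> real"
  assumes nonneg: "\<And>i j. a i j \<ge> 0" and ud: "\<And>i. unit_dq (\<delta> i)"
    and tree: "has_directed_spanning_tree a"
  shows "achieves_formation a \<delta>"
  unfolding achieves_formation_def
proof (intro allI impI)
  fix x assume sol: "closed_loop_solution a \<delta> x"
  obtain k par where kp: "\<And>i. i \<noteq> k \<Longrightarrow> a i (par i) > 0" "\<And>i. \<exists>m. (par ^^ m) i = k"
    using tree unfolding has_directed_spanning_tree_def by blast
  define yl where "yl = (\<lambda>i t. fst (yc \<delta> x i t))"
  define yh where "yh = (\<lambda>i t. snd (yc \<delta> x i t))"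
  have dl: "((\<lambda>s. yl i s) has_vector_derivative - (\<Sum>j\<in>UNIV. a i j *\<^sub>R (yl i t - yl j t))) (at t within {0..})"
    if "0 \<le> t" for i t
    using rot_deriv[OF sol ud that, of i] by (simp add: yl_def fst_sum)
  have dh: "((\<lambda>s. yh i s) has_vector_derivative - (\<Sum>j\<in>UNIV. a i j *\<^sub>R (yh i t - yh j t))) (at t within {0..})"
    if "0 \<le> t" for i t
    using tr_deriv[OF sol ud that, of i] by (simp add: yh_def snd_sum)
  have ctl: "consensus_tree a (\<lambda>i t. yl i t $ c) k par" for c
    by (intro consensus_tree.intro consensus.intro consensus_tree_axioms.intro nonneg kp comp_ode dl)
  have cth: "consensus_tree a (\<lambda>i t. yh i t $ c) k par" for c
    by (intro consensus_tree.intro consensus.intro consensus_tree_axioms.intro nonneg kp comp_ode dh)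
  have "\<forall>c. \<exists>l. \<forall>i. ((\<lambda>t. yl i t $ c) \<longlongrightarrow> l) at_top"
    using consensus_tree.converge[OF ctl] by blast
  then obtain Ll where Ll: "\<And>c i. ((\<lambda>t. yl i t $ c) \<longlongrightarrow> Ll c) at_top" by metis
  have "\<forall>c. \<exists>l. \<forall>i. ((\<lambda>t. yh i t $ c) \<longlongrightarrow> l) at_top"
    using consensus_tree.converge[OF cth] by blast
  then obtain Lh where Lh: "\<And>c i. ((\<lambda>t. yh i t $ c) \<longlongrightarrow> Lh c) at_top" by metis
  define L1 where "L1 = (\<chi> c. Ll c)"
  define L2 where "L2 = (\<chi> c. Lh c)"
  have l1: "(yl i \<longlongrightarrow> L1) at_top" for i
    by (rule vec_tendstoI) (simp add: L1_def Ll)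
  have l2: "(yh i \<longlongrightarrow> L2) at_top" for i
    by (rule vec_tendstoI) (simp add: L2_def Lh)
  show "\<exists>L. \<forall>i. ((\<lambda>t. xc \<delta> x i t) \<longlongrightarrow> L) at_top"
  proof (intro exI allI)
    fix i
    have e1: "((\<lambda>t. qexp3 (yl i t)) \<longlongrightarrow> qexp3 L1) at_top"
      by (rule isCont_tendsto_compose[OF qexp3_cont l1])
    have e2: "((\<lambda>t. qmult (pure4 (yh i t)) (qexp3 (yl i t))) \<longlongrightarrow> qmult (pure4 L2) (qexp3 L1)) at_top"
      by (rule bounded_bilinear.tendsto[OF bbl_qmult bounded_linear.tendsto[OF bl_pure4 l2] e1])
    have lim: "((\<lambda>t. (qexp3 (yl i t), qmult (pure4 (yh i t)) (qexp3 (yl i t)))) \<longlongrightarrow> (qexp3 L1, qmult (pure4 L2) (qexp3 L1))) at_top"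
      by (rule tendsto_Pair[OF e1 e2])
    have ev: "\<forall>\<^sub>F t in at_top. (qexp3 (yl i t), qmult (pure4 (yh i t)) (qexp3 (yl i t))) = xc \<delta> x i t"
    proof (rule eventually_at_top_linorder[THEN iffD2], intro exI[of _ 0] allI impI)
      fix t :: real assume t: "0 \<le> t"
      note u = xc_unit[OF sol ud t, of i]
      have f: "qexp3 (yl i t) = fst (xc \<delta> x i t)"
        using qexp3_qlog3[OF u(2,3)] by (simp add: yl_def fst_yc)
      have s: "qmult (pure4 (yh i t)) (qexp3 (yl i t)) = snd (xc \<delta> x i t)"
        unfolding f using unit_snd_repr[OF u(1)] by (simp add: yh_def snd_yc)
      show "(qexp3 (yl i t), qmult (pure4 (yh i t)) (qexp3 (yl i t))) = xc \<delta> x i t"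
        using f s by (simp add: prod_eq_iff)
    qed
    show "((\<lambda>t. xc \<delta> x i t) \<longlongrightarrow> (qexp3 L1, qmult (pure4 L2) (qexp3 L1))) at_top"
      by (rule Lim_transform_eventually[OF lim ev])
  qed
qed


definition Erel :: "('n \<Rightarrow> 'n \<Rightarrow> real) \<Rightarrow> ('n \<times> 'n) set" where
  "Erel a = {(j, i). a i j > 0}"

lemma root_tree:
  fixes a :: "'n \<Rightarrow> 'n \<Rightarrow> real"
  assumes k: "\<And>i. (k, i) \<in> (Erel a)\<^sup>*"
  shows "has_directed_spanning_tree a"
proof -
  define E where "E = Erel a"
  define d where "d i = (LEAST m. (k, i) \<in> E ^^ m)" for i
  have dE: "(k, i) \<in> E ^^ d i" for i
    unfolding d_def E_def by (rule LeastI_ex) (rule rtrancl_power[THEN iffD1, OF k])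
  have dmin: "(k, i) \<in> E ^^ m \<Longrightarrow> d i \<le> m" for i m unfolding d_def by (rule Least_le)
  define par where "par i = (SOME j. (k, j) \<in> E ^^ (d i - 1) \<and> a i j > 0)" for i
  have parp: "(k, par i) \<in> E ^^ (d i - 1) \<and> a i (par i) > 0" if "i \<noteq> k" for i
  proof -
    have "d i \<noteq> 0"
    proof
      assume "d i = 0" then have "(k, i) \<in> E ^^ 0" using dE[of i] by simp
      then show False using that by simp
    qed
    then obtain m where m: "d i = Suc m" by (cases "d i") auto
    obtain j where "(k, j) \<in> E ^^ m" "(j, i) \<in> E" using dE[of i] unfolding m by (auto elim: relpow_Suc_E)
    then have "\<exists>j. (k, j) \<in> E ^^ (d i - 1) \<and> a i j > 0" using m by (auto simp: E_def Erel_def)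
    then show ?thesis unfolding par_def by (rule someI_ex)
  qed
  have dpar: "d (par i) < d i" if "i \<noteq> k" for i
  proof -
    have "d i \<noteq> 0"
    proof
      assume "d i = 0" then have "(k, i) \<in> E ^^ 0" using dE[of i] by simp
      then show False using that by simp
    qed
    then show ?thesis using dmin[OF conjunct1[OF parp[OF that]]] by simp
  qed
  have reach: "\<exists>m. (par ^^ m) i = k" for i
  proof (induction "d i" arbitrary: i rule: less_induct)
    case less
    show ?case
    proof (cases "i = k")
      case True then show ?thesis by (intro exI[of _ 0]) simp
    next
      case False
      obtain m where "(par ^^ m) (par i) = k" using less dpar[OF False] by blast
      moreover have "(par ^^ Suc m) i = (par ^^ m) (par i)" by (simp only: funpow_Suc_right o_apply)
      ultimately have "(par ^^ Suc m) i = k" by simp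
      then show ?thesis by blast
    qed
  qed
  show ?thesis unfolding has_directed_spanning_tree_def
    using parp reach by blast
qed

definition pclosed :: "('n \<Rightarrow> 'n \<Rightarrow> real) \<Rightarrow> 'n set \<Rightarrow> bool" where
  "pclosed a S \<longleftrightarrow> (\<forall>i\<in>S. \<forall>j. a i j > 0 \<longrightarrow> j \<in> S)"

lemma pclosed_rtrancl: assumes "pclosed a S" "(w, u) \<in> (Erel a)\<^sup>*" "u \<in> S" shows "w \<in> S"
  using assms(2,3)
proof (induction rule: converse_rtrancl_induct)
  case base then show ?case .
next
  case (step y z)
  then show ?case using assms(1) by (auto simp: pclosed_def Erel_def)
qed

lemma no_root_two_sets:
  fixes a :: "'n::finite \<Rightarrow> 'n \<Rightarrow> real"
  assumes nr: "\<And>k. \<exists>i. (k, i) \<notin> (Erel a)\<^sup>*"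
  shows "\<exists>S1 S2. pclosed a S1 \<and> pclosed a S2 \<and> S1 \<noteq> {} \<and> S2 \<noteq> {} \<and> S1 \<inter> S2 = {}"
proof -
  define Anc where "Anc v = {u. (u, v) \<in> (Erel a)\<^sup>*}" for v
  have Anc_cl: "pclosed a (Anc v)" for v
    unfolding pclosed_def Anc_def Erel_def
    by (auto intro: converse_rtrancl_into_rtrancl)
  have Anc_ne: "v \<in> Anc v" for v by (simp add: Anc_def)
  define n where "n = (LEAST n. \<exists>S. pclosed a S \<and> S \<noteq> {} \<and> card S = n)"
  have "\<exists>S. pclosed a S \<and> S \<noteq> {} \<and> card S = n"
    unfolding n_def by (rule LeastI_ex) (use Anc_cl Anc_ne in blast)
  then obtain S1 where S1: "pclosed a S1" "S1 \<noteq> {}" "card S1 = n" by blast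
  have nmin: "pclosed a S \<Longrightarrow> S \<noteq> {} \<Longrightarrow> n \<le> card S" for S
    unfolding n_def by (rule Least_le) blast
  obtain k where k: "k \<in> S1" using S1 by blast
  obtain i where i: "(k, i) \<notin> (Erel a)\<^sup>*" using nr by blast
  have disj: "S1 \<inter> Anc i = {}"
  proof (rule ccontr)
    assume "S1 \<inter> Anc i \<noteq> {}"
    then obtain u where u: "u \<in> S1" "(u, i) \<in> (Erel a)\<^sup>*" by (auto simp: Anc_def)
    have sub: "Anc u \<subseteq> S1" using pclosed_rtrancl[OF S1(1) _ u(1)] by (auto simp: Anc_def)
    have "n \<le> card (Anc u)" by (rule nmin[OF Anc_cl]) (use Anc_ne in auto)
    then have "Anc u = S1" using card_subset_eq[OF finite sub] card_mono[OF finite sub] S1(3) by simp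
    then have "(k, u) \<in> (Erel a)\<^sup>*" using k by (auto simp: Anc_def)
    then show False using u(2) i by (meson rtrancl_trans)
  qed
  show ?thesis using S1 Anc_cl Anc_ne disj by blast
qed


lemma equilibrium:
  fixes a :: "'n::finite \<Rightarrow> 'n \<Rightarrow> real"
  assumes nonneg: "\<And>i j. a i j \<ge> 0" and S: "pclosed a S1" "pclosed a S2" "S1 \<inter> S2 = {}"
    and p: "p \<in> S1" and q: "q \<in> S2"
  shows "\<exists>y. (\<forall>i. (\<Sum>j\<in>UNIV. a i j * (y i - y j)) = 0) \<and> y p = 0 \<and> y q = 1"
proof -
  define d where "d i = (\<Sum>j\<in>UNIV. a i j)" for i
  define T :: "real^'n \<Rightarrow> real^'n" where
    "T z = (\<chi> i. if i \<in> S1 then 0 else if i \<in> S2 then 1 else if d i = 0 then z $ i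
        else (\<Sum>j\<in>UNIV. a i j * z $ j) / d i)" for z
  have dnn: "d i \<ge> 0" for i unfolding d_def by (intro sum_nonneg) (use nonneg in auto)
  have contT: "continuous_on (cbox 0 1) T"
    unfolding T_def
  proof (intro continuous_on_vec_lambda)
    fix i
    show "continuous_on (cbox 0 1) (\<lambda>z. if i \<in> S1 then 0 else if i \<in> S2 then 1 else if d i = 0 then z $ i
        else (\<Sum>j\<in>UNIV. a i j * z $ j) / d i)"
      by (cases "i \<in> S1"; cases "i \<in> S2"; cases "d i = 0") (auto intro!: continuous_intros)
  qed
  have mapsT: "T \<in> cbox 0 1 \<rightarrow> cbox 0 1"
  proof
    fix z :: "real^'n" assume z: "z \<in> cbox 0 1"
    then have zb: "0 \<le> z $ j" "z $ j \<le> 1" for j by (auto simp: mem_box_cart)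
    have "0 \<le> T z $ i \<and> T z $ i \<le> 1" for i
    proof (cases "i \<in> S1 \<or> i \<in> S2 \<or> d i = 0")
      case True
      then have "T z $ i = (if i \<in> S1 then 0 else if i \<in> S2 then 1 else z $ i)" by (auto simp: T_def)
      then show ?thesis using zb[of i] by simp
    next
      case False
      then have dp: "d i > 0" using dnn[of i] by simp
      have s0: "0 \<le> (\<Sum>j\<in>UNIV. a i j * z $ j)" by (intro sum_nonneg) (use nonneg zb in auto)
      have s1: "(\<Sum>j\<in>UNIV. a i j * z $ j) \<le> d i" unfolding d_def
        by (intro sum_mono) (use nonneg zb in \<open>auto intro: mult_left_le\<close>)
      have "T z $ i = (\<Sum>j\<in>UNIV. a i j * z $ j) / d i" using False by (simp add: T_def)
      moreover have "0 \<le> (\<Sum>j\<in>UNIV. a i j * z $ j) / d i" using s0 dp by simp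
      moreover have "(\<Sum>j\<in>UNIV. a i j * z $ j) / d i \<le> 1" using s1 dp by simp
      ultimately show ?thesis by simp
    qed
    then show "T z \<in> cbox 0 1" by (simp add: mem_box_cart)
  qed
  have ne: "cbox (0::real^'n) 1 \<noteq> {}"
  proof -
    have "(0::real^'n) \<in> cbox 0 1" by (simp add: mem_box_cart)
    then show ?thesis by blast
  qed
  obtain z where z: "z \<in> cbox 0 1" "T z = z"
    using brouwer[OF compact_cbox convex_box(1) ne contT mapsT] by blast
  have zi: "z $ i = T z $ i" for i using z(2) by simp
  define y where "y i = z $ i" for i
  have y1: "y i = 0" if "i \<in> S1" for i using zi[of i] that by (simp add: y_def T_def)
  have y2: "y i = 1" if "i \<in> S2" for i
  proof -
    have "i \<notin> S1" using that S(3) by blast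
    then show ?thesis using zi[of i] that by (simp add: y_def T_def)
  qed
  have "(\<Sum>j\<in>UNIV. a i j * (y i - y j)) = 0" for i
  proof (cases "i \<in> S1")
    case True
    have z0: "a i j * (y i - y j) = 0" for j
    proof (cases "a i j > 0")
      case True then have "j \<in> S1" using S(1) \<open>i \<in> S1\<close> by (auto simp: pclosed_def)
      then show ?thesis using y1 \<open>i \<in> S1\<close> by simp
    next
      case False then have "a i j = 0" using nonneg[of i j] by simp
      then show ?thesis by simp
    qed
    then show ?thesis by (intro sum.neutral) (use z0 in simp)
  next
    case nS1: False
    show ?thesis
    proof (cases "i \<in> S2")
      case True
      have z0: "a i j * (y i - y j) = 0" for j
      proof (cases "a i j > 0")
        case True then have "j \<in> S2" using S(2) \<open>i \<in> S2\<close> by (auto simp: pclosed_def)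
        then show ?thesis using y2 \<open>i \<in> S2\<close> by simp
      next
        case False then have "a i j = 0" using nonneg[of i j] by simp
        then show ?thesis by simp
      qed
      then show ?thesis by (intro sum.neutral) (use z0 in simp)
    next
      case nS2: False
      show ?thesis
      proof (cases "d i = 0")
        case True
        then have "a i j = 0" for j
          using sum_nonneg_eq_0_iff[of UNIV "a i"] nonneg by (simp add: d_def)
        then show ?thesis by simp
      next
        case False
        have "y i = (\<Sum>j\<in>UNIV. a i j * y j) / d i" using zi[of i] nS1 nS2 False by (simp add: y_def T_def)
        then have "y i * d i = (\<Sum>j\<in>UNIV. a i j * y j)" using False by simp
        moreover have "(\<Sum>j\<in>UNIV. a i j * (y i - y j)) = y i * d i - (\<Sum>j\<in>UNIV. a i j * y j)"
          by (simp add: d_def algebra_simps sum_subtractf sum_distrib_left)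
        ultimately show ?thesis by simp
      qed
    qed
  qed
  then show ?thesis using y1[OF p] y2[OF q] by blast
qed

lemma no_tree_equilibrium:
  fixes a :: "'n::finite \<Rightarrow> 'n \<Rightarrow> real"
  assumes nonneg: "\<And>i j. a i j \<ge> 0" and nt: "\<not> has_directed_spanning_tree a"
  shows "\<exists>y p q. (\<forall>i. (\<Sum>j\<in>UNIV. a i j * (y i - y j)) = 0) \<and> y p \<noteq> y q"
proof -
  have nr: "\<exists>i. (k, i) \<notin> (Erel a)\<^sup>*" for k
  proof (rule ccontr)
    assume "\<not> (\<exists>i. (k, i) \<notin> (Erel a)\<^sup>*)"
    then have "(k, i) \<in> (Erel a)\<^sup>*" for i by simp
    then have "has_directed_spanning_tree a" by (rule root_tree)
    then show False using nt by simp
  qed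
  obtain S1 S2 where S: "pclosed a S1" "pclosed a S2" "S1 \<noteq> {}" "S2 \<noteq> {}" "S1 \<inter> S2 = {}"
    using no_root_two_sets[OF nr] by blast
  obtain p q where "p \<in> S1" "q \<in> S2" using S by blast
  from equilibrium[OF nonneg S(1,2,5) this] obtain y where
    "\<forall>i. (\<Sum>j\<in>UNIV. a i j * (y i - y j)) = 0" "y p = 0" "y q = 1" by blast
  then show ?thesis by (intro exI[of _ y] exI[of _ p] exI[of _ q]) simp
qed


lemma converse:
  fixes a :: "'n::finite \<Rightarrow> 'n \<Rightarrow> real"
  assumes nonneg: "\<And>i j. a i j \<ge> 0" and ud: "\<And>i. unit_dq (\<delta> i)"
    and nt: "\<not> has_directed_spanning_tree a"
  shows "\<not> achieves_formation a \<delta>"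
proof
  assume af: "achieves_formation a \<delta>"
  obtain y p q where y: "\<And>i. (\<Sum>j\<in>UNIV. a i j * (y i - y j)) = 0" "y p \<noteq> y q"
    using no_tree_equilibrium[OF nonneg nt] by blast
  define e :: "real^3" where "e = vector [1, 0, 0]"
  define X where "X i = (qone, pure4 (y i *\<^sub>R e))" for i
  define x where "x i t = dq_mult (X i) (\<delta> i)" for i and t :: real
  have Xu: "unit_dq (X i)" for i
    by (simp add: unit_dq_def X_def dq_mult_def dq_conj_def vec4_eq_iff)
  have xcX: "xc \<delta> x i t = X i" for i t
    using ud[of i] by (simp add: xc_def x_def dq_mult_assoc unit_dq_iff)
  have ycX: "yc \<delta> x i t = (0, y i *\<^sub>R e)" for i t
    by (simp add: yc_def xcX dq_log6_def X_def qlog3_def vec3_eq_iff)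
  have sum0: "(\<Sum>j\<in>UNIV. a i j *\<^sub>R (yc \<delta> x i t - yc \<delta> x j t)) = 0" for i t
  proof -
    have "(\<Sum>j\<in>UNIV. a i j *\<^sub>R (yc \<delta> x i t - yc \<delta> x j t)) = (0, (\<Sum>j\<in>UNIV. a i j * (y i - y j)) *\<^sub>R e)"
      by (simp add: ycX prod_eq_iff fst_sum snd_sum scaleR_sum_left algebra_simps)
    then show ?thesis using y(1)[of i] by (simp add: zero_prod_def)
  qed
  have Q0: "Qmat r 0 = 0" for r
    unfolding Qmat_eq by (rule linear_0[OF bounded_linear.linear[OF bl_Dexp]])
  have prot0: "protocol a \<delta> x i t = 0" for i t
    unfolding protocol_def sum0
    by (simp add: Q8_def Let_def Q0 H4plus_def H4minus_def H8minus_def pure4_def vector_def[symmetric])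
       (simp add: vec4_eq_iff pure4_comp[of 0, simplified] zero_prod_def)
  have sol: "closed_loop_solution a \<delta> x"
    unfolding closed_loop_solution_def
  proof (intro allI impI conjI)
    fix i and t :: real
    show "unit_dq (x i t)" unfolding x_def by (rule unit_dq_mult[OF Xu ud])
    show "fst (xc \<delta> x i t) \<noteq> - qone" by (simp add: xcX X_def vec4_eq_iff)
    show "(x i has_vector_derivative protocol a \<delta> x i t) (at t within {0..})"
      unfolding prot0 x_def by simp
  qed
  obtain L where L: "\<And>i. ((\<lambda>t. xc \<delta> x i t) \<longlongrightarrow> L) at_top"
    using af sol unfolding achieves_formation_def by blast
  have "X p = L" "X q = L" using L[of p] L[of q] by (simp_all add: xcX tendsto_const_iff)
  then have "X p = X q" by simp
  then have "pure4 (y p *\<^sub>R e) $ 2 = pure4 (y q *\<^sub>R e) $ 2" by (simp add: X_def)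
  then have "y p = y q" by (simp add: e_def)
  then show False using y(2) by simp
qed

theorem theorem10:
  fixes a :: "'n::finite \<Rightarrow> 'n \<Rightarrow> real"
    and \<delta> :: "'n \<Rightarrow> (real^4) \<times> (real^4)"
  assumes "\<And>i j. a i j \<ge> 0"
    and "\<And>i. a i i = 0"
    and "\<And>i. unit_dq (\<delta> i)"
  shows "achieves_formation a \<delta> \<longleftrightarrow> has_directed_spanning_tree a"
proof -
  have f: "has_directed_spanning_tree a \<Longrightarrow> achieves_formation a \<delta>"
    by (rule forward) (use assms in auto)
  have c: "\<not> has_directed_spanning_tree a \<Longrightarrow> \<not> achieves_formation a \<delta>"
    by (rule converse) (use assms in auto)
  show ?thesis using f c by blast
qed


end
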